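(* Let $I$ be a nontrivial real interval (nonempty and not a singleton). A standard function $F\colon I^*\to\mathbb{R}$ is preassociative and unarily quasi-range-idempotent, with $F_1$ and $F_2$ continuous and one-to-one in each argument, if and only if there exist a real interval $J$ of one of the forms $]-\infty,b[$, $]-\infty,b]$, $]a,\infty[$, $[a,\infty[$ or $\mathbb{R}$ (with $b\leqslant 0\leqslant a$), a continuous and strictly monotonic function $\varphi$ from $I$ onto $J$, and a continuous and strictly monotonic function $\psi\colon J\to\mathbb{R}$ such that $$F_n(x_1,\ldots,x_n)=\psi(\varphi(x_1)+\cdots+\varphi(x_n)),\qquad n\geqslant 1.$$ For such a function $F$, we have $\psi=F_1\circ\varphi^{-1}$ and $I$ is necessarily open at least on one end. Moreover, $\varphi$ can be chosen to be strictly increasing.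
   Context: $I^*=\bigcup_{n\geqslant 0}I^n$ is the set of finite tuples over $I$, $I^0=\{\varepsilon\}$ with $\varepsilon$ the empty tuple; $F(\mathbf{x},\mathbf{y})$ denotes $F$ applied to the concatenation, concatenation with $\varepsilon$ leaving tuples unchanged. $F_n=F|_{I^n}$, $F^{\flat}=F|_{I^*\setminus\{\varepsilon\}}$. $F$ is standard if $F(\mathbf{x})=F(\varepsilon)$ only for $\mathbf{x}=\varepsilon$. $F$ is preassociative if for all tuples $\mathbf{x},\mathbf{y},\mathbf{y}',\mathbf{z}$, $F(\mathbf{y})=F(\mathbf{y}')$ implies $F(\mathbf{x},\mathbf{y},\mathbf{z})=F(\mathbf{x},\mathbf{y}',\mathbf{z})$. $F$ is unarily quasi-range-idempotent if $\mathrm{ran}(F_1)=\mathrm{ran}(F^{\flat})$. *)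

theory Defs
  imports "HOL-Analysis.Analysis"
begin

text \<open>Tuples over I are represented by lists whose entries lie in I;
  the empty tuple is the empty list and concatenation is append.\<close>

definition tuples :: "'a set \<Rightarrow> 'a list set" where
  "tuples I = {xs. set xs \<subseteq> I}"

definition standard :: "'a set \<Rightarrow> ('a list \<Rightarrow> 'b) \<Rightarrow> bool" where
  "standard I F \<longleftrightarrow> (\<forall>xs \<in> tuples I. F xs = F [] \<longrightarrow> xs = [])"

definition preassociative :: "'a set \<Rightarrow> ('a list \<Rightarrow> 'b) \<Rightarrow> bool" where
  "preassociative I F \<longleftrightarrow>
     (\<forall>x \<in> tuples I. \<forall>y \<in> tuples I. \<forall>y' \<in> tuples I. \<forall>z \<in> tuples I.
        F y = F y' \<longrightarrow> F (x @ y @ z) = F (x @ y' @ z))"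

definition unarily_quasi_range_idempotent :: "'a set \<Rightarrow> ('a list \<Rightarrow> 'b) \<Rightarrow> bool" where
  "unarily_quasi_range_idempotent I F \<longleftrightarrow>
     (\<lambda>x. F [x]) ` I = F ` (tuples I - {[]})"

definition strictly_monotonic_on :: "'a::order set \<Rightarrow> ('a \<Rightarrow> 'b::order) \<Rightarrow> bool" where
  "strictly_monotonic_on S f \<longleftrightarrow> strict_mono_on S f \<or> strict_antimono_on S f"

end

theory Submission
  imports Defs
begin

lemma ivt_conn:
  fixes h :: "'a::topological_space \<Rightarrow> real"
  assumes "connected T" "continuous_on T h" "p \<in> T" "q \<in> T" "h p \<le> c" "c \<le> h q"
  shows "\<exists>t\<in>T. h t = c"
proof -
  have "connected (h ` T)" using connected_continuous_image assms(1,2) by blast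
  then have "c \<in> h ` T"
    using connectedD_interval[of "h ` T" "h p" "h q" c] assms(3-6) by auto
  then show ?thesis by auto
qed

lemma convex_lt_pairs:
  fixes S :: "real set"
  assumes "is_interval S"
  shows "convex {p. fst p \<in> S \<and> snd p \<in> S \<and> fst p < snd p}"
proof -
  have cS: "convex S" using assms is_interval_convex_1 by blast
  have eq: "{p. fst p \<in> S \<and> snd p \<in> S \<and> fst p < snd p}
      = (S \<times> S) \<inter> {p. inner ((1::real), (-1::real)) p < 0}"
    by (auto simp: inner_prod_def)
  show ?thesis unfolding eq
    by (intro convex_Int convex_Times cS convex_halfspace_lt)
qed

lemma inj_cont_strict:
  fixes g :: "real \<Rightarrow> real"
  assumes "is_interval S" "continuous_on S g" "inj_on g S"
  shows "strict_mono_on S g \<or> strict_antimono_on S g"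
proof (rule ccontr)
  assume "\<not> ?thesis"
  then obtain a b c d where ab: "a \<in> S" "b \<in> S" "a < b" "\<not> g a < g b"
    and cd: "c \<in> S" "d \<in> S" "c < d" "\<not> g c > g d"
    unfolding strict_mono_on_def monotone_on_def by auto
  let ?T = "{p. fst p \<in> S \<and> snd p \<in> S \<and> fst p < snd p}"
  have conn: "connected ?T" using convex_lt_pairs[OF assms(1)] convex_connected by blast
  have cont: "continuous_on ?T (\<lambda>p. g (snd p) - g (fst p))"
    by (intro continuous_intros continuous_on_compose2[OF assms(2)]) auto
  have "g a \<noteq> g b" using ab assms(3) unfolding inj_on_def by force
  then have 1: "g b - g a \<le> 0" using ab by simp
  have 2: "0 \<le> g d - g c" using cd by simp
  obtain t where t: "t \<in> ?T" "g (snd t) - g (fst t) = 0"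
    using ivt_conn[OF conn cont, of "(a,b)" "(c,d)" 0] ab cd 1 2 by auto
  then have "g (snd t) = g (fst t)" by simp
  then have "snd t = fst t" using t assms(3) unfolding inj_on_def by blast
  then show False using t by simp
qed

lemma mono_interval_cont:
  fixes g :: "real \<Rightarrow> real"
  assumes S: "is_interval S" and GS: "is_interval (g ` S)"
    and mono: "\<And>x y. x \<in> S \<Longrightarrow> y \<in> S \<Longrightarrow> x \<le> y \<Longrightarrow> g x \<le> g y"
  shows "continuous_on S g"
  unfolding continuous_on_iff
proof (intro ballI allI impI)
  fix x e :: real
  assume x: "x \<in> S" and e: "0 < e"
  have up: "\<exists>d>0. \<forall>x'\<in>S. x \<le> x' \<and> x' < x + d \<longrightarrow> g x' < g x + e"
  proof (cases "\<exists>y\<in>S. g x + e/2 \<le> g y")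
    case True
    then obtain y where y: "y \<in> S" "g x + e/2 \<le> g y" by auto
    have m: "g x \<in> g ` S" "g y \<in> g ` S" using x y by auto
    have "g x \<le> g x + e/2" "g x + e/2 \<le> g y" using e y by auto
    then have "g x + e/2 \<in> g ` S" using is_interval_1[THEN iffD1, OF GS] m by blast
    then obtain x1 where x1: "x1 \<in> S" "g x1 = g x + e/2" by auto
    have "x < x1"
    proof (rule ccontr)
      assume "\<not> x < x1" then have "g x1 \<le> g x" using mono[of x1 x] x x1 by simp
      then show False using x1 e by linarith
    qed
    show ?thesis
    proof (intro exI[of _ "x1 - x"] conjI ballI impI)
      show "0 < x1 - x" using \<open>x < x1\<close> by simp
      fix x' assume "x' \<in> S" "x \<le> x' \<and> x' < x + (x1 - x)"
      then have "g x' \<le> g x1" using mono[of x' x1] x1 by simp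
      then show "g x' < g x + e" using x1 e by linarith
    qed
  next
    case False
    show ?thesis
    proof (intro exI[of _ 1] conjI ballI impI)
      fix x' assume "x' \<in> S" "x \<le> x' \<and> x' < x + 1"
      then have "g x' < g x + e/2" using False by force
      then show "g x' < g x + e" using e by simp
    qed simp
  qed
  have down: "\<exists>d>0. \<forall>x'\<in>S. x' \<le> x \<and> x - d < x' \<longrightarrow> g x - e < g x'"
  proof (cases "\<exists>y\<in>S. g y \<le> g x - e/2")
    case True
    then obtain y where y: "y \<in> S" "g y \<le> g x - e/2" by auto
    have m: "g x \<in> g ` S" "g y \<in> g ` S" using x y by auto
    have "g y \<le> g x - e/2" "g x - e/2 \<le> g x" using e y by auto
    then have "g x - e/2 \<in> g ` S" using is_interval_1[THEN iffD1, OF GS] m by blast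
    then obtain x1 where x1: "x1 \<in> S" "g x1 = g x - e/2" by auto
    have "x1 < x"
    proof (rule ccontr)
      assume "\<not> x1 < x" then have "g x \<le> g x1" using mono[of x x1] x x1 by simp
      then show False using x1 e by linarith
    qed
    show ?thesis
    proof (intro exI[of _ "x - x1"] conjI ballI impI)
      show "0 < x - x1" using \<open>x1 < x\<close> by simp
      fix x' assume "x' \<in> S" "x' \<le> x \<and> x - (x - x1) < x'"
      then have "g x1 \<le> g x'" using mono[of x1 x'] x1 by simp
      then show "g x - e < g x'" using x1 e by linarith
    qed
  next
    case False
    show ?thesis
    proof (intro exI[of _ 1] conjI ballI impI)
      fix x' assume "x' \<in> S" "x' \<le> x \<and> x - 1 < x'"
      then have "g x - e/2 < g x'" using False by force
      then show "g x - e < g x'" using e by simp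
    qed simp
  qed
  obtain d1 where d1: "d1 > 0" "\<forall>x'\<in>S. x \<le> x' \<and> x' < x + d1 \<longrightarrow> g x' < g x + e" using up by auto
  obtain d2 where d2: "d2 > 0" "\<forall>x'\<in>S. x' \<le> x \<and> x - d2 < x' \<longrightarrow> g x - e < g x'" using down by auto
  show "\<exists>d>0. \<forall>x'\<in>S. dist x' x < d \<longrightarrow> dist (g x') (g x) < e"
  proof (intro exI[of _ "min d1 d2"] conjI ballI impI)
    show "0 < min d1 d2" using d1 d2 by simp
    fix x' assume x': "x' \<in> S" "dist x' x < min d1 d2"
    show "dist (g x') (g x) < e"
    proof (cases "x \<le> x'")
      case True
      then have "g x \<le> g x'" using mono x x' by simp
      moreover have "g x' < g x + e" using d1 x' True by (auto simp: dist_real_def)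
      ultimately show ?thesis by (simp add: dist_real_def)
    next
      case False
      then have "g x' \<le> g x" using mono x x' by simp
      moreover have "g x - e < g x'" using d2 x' False by (auto simp: dist_real_def)
      ultimately show ?thesis by (simp add: dist_real_def)
    qed
  qed
qed

lemma antimono_interval_cont:
  fixes g :: "real \<Rightarrow> real"
  assumes S: "is_interval S" and GS: "is_interval (g ` S)"
    and mono: "\<And>x y. x \<in> S \<Longrightarrow> y \<in> S \<Longrightarrow> x \<le> y \<Longrightarrow> g y \<le> g x"
  shows "continuous_on S g"
proof -
  have "(\<lambda>x. - g x) ` S = uminus ` (g ` S)" by auto
  moreover have "is_interval (uminus ` (g ` S))"
    unfolding is_interval_1
  proof clarify
    fix a b x assume h: "a \<in> S" "b \<in> S" "- g a \<le> x" "x \<le> - g b"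
    then have "g b \<le> - x" "- x \<le> g a" by auto
    then have "- x \<in> g ` S" using GS h unfolding is_interval_1 by blast
    then show "x \<in> uminus ` g ` S" by (metis image_eqI minus_minus)
  qed
  ultimately have "continuous_on S (\<lambda>x. - (g x))"
    using mono_interval_cont[OF S, of "\<lambda>x. - g x"] mono by auto
  then have "continuous_on S (\<lambda>x. - (- (g x)))" by (rule continuous_on_minus)
  then show ?thesis by simp
qed

lemma cont_image_interval:
  fixes g :: "real \<Rightarrow> real"
  assumes "is_interval S" "continuous_on S g"
  shows "is_interval (g ` S)"
  using assms connected_continuous_image is_interval_connected_1 by blast

lemma inv_strict_mono_cont:
  fixes g :: "real \<Rightarrow> real"
  assumes S: "is_interval S" and c: "continuous_on S g" and sm: "strict_mono_on S g"
  shows "continuous_on (g ` S) (inv_into S g)" "strict_mono_on (g ` S) (inv_into S g)"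
proof -
  have inj: "inj_on g S" using sm strict_mono_on_imp_inj_on by blast
  show sm2: "strict_mono_on (g ` S) (inv_into S g)"
    unfolding strict_mono_on_def monotone_on_def
  proof clarify
    fix a b assume ab: "a \<in> S" "b \<in> S" "g a < g b"
    have "a < b"
    proof (rule ccontr)
      assume "\<not> a < b" then have "b \<le> a" by simp
      then have "g b \<le> g a" using sm ab strict_mono_on_leD by blast
      then show False using ab by simp
    qed
    then show "inv_into S g (g a) < inv_into S g (g b)" using inv_into_f_f[OF inj] ab by simp
  qed
  have "inv_into S g ` g ` S = S" using inj by simp
  then show "continuous_on (g ` S) (inv_into S g)"
    using mono_interval_cont[OF cont_image_interval[OF S c], of "inv_into S g"] S sm2
    by (metis strict_mono_on_leD)
qed

lemma inv_strict_antimono_cont: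
  fixes g :: "real \<Rightarrow> real"
  assumes S: "is_interval S" and c: "continuous_on S g" and sm: "strict_antimono_on S g"
  shows "continuous_on (g ` S) (inv_into S g)" "strict_antimono_on (g ` S) (inv_into S g)"
proof -
  have inj: "inj_on g S" using sm unfolding inj_on_def monotone_on_def
    by (metis linorder_neq_iff order_less_irrefl)
  show sm2: "strict_antimono_on (g ` S) (inv_into S g)"
    unfolding monotone_on_def
  proof clarify
    fix a b assume ab: "a \<in> S" "b \<in> S" "g a < g b"
    have "b < a"
    proof (rule ccontr)
      assume "\<not> b < a" then have "a \<le> b" by simp
      then have "g b \<le> g a" using sm ab unfolding monotone_on_def
        by (metis order_le_less order_less_imp_le)
      then show False using ab by simp
    qed
    then show "inv_into S g (g b) < inv_into S g (g a)" using inv_into_f_f[OF inj] ab by simp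
  qed
  have "inv_into S g ` g ` S = S" using inj by simp
  then show "continuous_on (g ` S) (inv_into S g)"
    using antimono_interval_cont[OF cont_image_interval[OF S c], of "inv_into S g"] S sm2
    unfolding monotone_on_def by (metis order_le_less order_refl)
qed

primrec pw :: "(real \<Rightarrow> real \<Rightarrow> real) \<Rightarrow> nat \<Rightarrow> real \<Rightarrow> real" where
  "pw g 0 x = x"
| "pw g (Suc n) x = g x (pw g n x)"

primrec rs :: "(real \<Rightarrow> real \<Rightarrow> real) \<Rightarrow> real \<Rightarrow> nat \<Rightarrow> real \<Rightarrow> real" where
  "rs g c 0 x = x"
| "rs g c (Suc n) x = g (rs g c n x) c"

locale aczel =
  fixes I :: "real set" and f :: "real \<Rightarrow> real \<Rightarrow> real"
  assumes intv: "is_interval I"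
    and nontriv: "\<exists>x\<in>I. \<exists>y\<in>I. x \<noteq> y"
    and closed: "\<And>x y. x \<in> I \<Longrightarrow> y \<in> I \<Longrightarrow> f x y \<in> I"
    and cont: "continuous_on (I \<times> I) (\<lambda>p. f (fst p) (snd p))"
    and assoc: "\<And>x y z. x \<in> I \<Longrightarrow> y \<in> I \<Longrightarrow> z \<in> I \<Longrightarrow> f (f x y) z = f x (f y z)"
    and injL: "\<And>x. x \<in> I \<Longrightarrow> inj_on (f x) I"
    and injR: "\<And>y. y \<in> I \<Longrightarrow> inj_on (\<lambda>x. f x y) I"
begin

lemma contL: "x \<in> I \<Longrightarrow> continuous_on I (f x)"
proof -
  assume x: "x \<in> I"
  have "continuous_on I (\<lambda>y. (\<lambda>p. f (fst p) (snd p)) ((\<lambda>y. (x,y)) y))"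
    by (rule continuous_on_compose2[OF cont]) (auto intro: continuous_intros simp: x)
  then show ?thesis by simp
qed

lemma contR: "y \<in> I \<Longrightarrow> continuous_on I (\<lambda>x. f x y)"
proof -
  assume y: "y \<in> I"
  have "continuous_on I (\<lambda>x. (\<lambda>p. f (fst p) (snd p)) ((\<lambda>x. (x,y)) x))"
    by (rule continuous_on_compose2[OF cont]) (auto intro: continuous_intros simp: y)
  then show ?thesis by simp
qed

lemma conn: "connected I" using intv is_interval_connected_1 by blast

lemma two_pts: obtains y1 y2 where "y1 \<in> I" "y2 \<in> I" "y1 < y2"
  using nontriv by (metis linorder_neq_iff)

lemma L_dir: "(\<forall>x\<in>I. strict_mono_on I (f x)) \<or> (\<forall>x\<in>I. strict_antimono_on I (f x))"
proof (rule ccontr)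
  assume "\<not> ?thesis"
  then obtain x1 x2 where x: "x1 \<in> I" "x2 \<in> I" "\<not> strict_mono_on I (f x1)" "\<not> strict_antimono_on I (f x2)"
    by auto
  have d1: "strict_antimono_on I (f x1)" using inj_cont_strict[OF intv contL injL] x by blast
  have d2: "strict_mono_on I (f x2)" using inj_cont_strict[OF intv contL injL] x by blast
  obtain y1 y2 where y: "y1 \<in> I" "y2 \<in> I" "y1 < y2" by (rule two_pts)
  have c: "continuous_on I (\<lambda>x. f x y2 - f x y1)"
    by (intro continuous_intros contR y)
  have 1: "f x1 y2 - f x1 y1 \<le> 0" using d1 y x unfolding monotone_on_def by (auto simp: less_imp_le)
  have 2: "0 \<le> f x2 y2 - f x2 y1" using d2 y x unfolding monotone_on_def by (auto simp: less_imp_le)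
  obtain t where t: "t \<in> I" "f t y2 - f t y1 = 0" using ivt_conn[OF conn c x(1) x(2) 1 2] by auto
  then have "y2 = y1" using injL[OF t(1)] y unfolding inj_on_def by auto
  then show False using y by simp
qed

lemma monoL: "x \<in> I \<Longrightarrow> strict_mono_on I (f x)"
proof -
  assume x: "x \<in> I"
  have "\<not> (\<forall>x\<in>I. strict_antimono_on I (f x))"
  proof
    assume A: "\<forall>x\<in>I. strict_antimono_on I (f x)"
    obtain y1 y2 where y: "y1 \<in> I" "y2 \<in> I" "y1 < y2" by (rule two_pts)
    have "f x y2 < f x y1" using A x y unfolding monotone_on_def by auto
    then have "f x (f x y1) < f x (f x y2)" using A x y closed unfolding monotone_on_def by auto
    moreover have "f (f x x) y2 < f (f x x) y1" using A x y closed unfolding monotone_on_def by auto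
    ultimately show False using assoc x y by simp
  qed
  then show ?thesis using L_dir x by blast
qed

lemma R_dir: "(\<forall>y\<in>I. strict_mono_on I (\<lambda>x. f x y)) \<or> (\<forall>y\<in>I. strict_antimono_on I (\<lambda>x. f x y))"
proof (rule ccontr)
  assume "\<not> ?thesis"
  then obtain x1 x2 where x: "x1 \<in> I" "x2 \<in> I" "\<not> strict_mono_on I (\<lambda>x. f x x1)" "\<not> strict_antimono_on I (\<lambda>x. f x x2)"
    by auto
  have d1: "strict_antimono_on I (\<lambda>x. f x x1)" using inj_cont_strict[OF intv contR injR] x by blast
  have d2: "strict_mono_on I (\<lambda>x. f x x2)" using inj_cont_strict[OF intv contR injR] x by blast
  obtain y1 y2 where y: "y1 \<in> I" "y2 \<in> I" "y1 < y2" by (rule two_pts)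
  have c: "continuous_on I (\<lambda>x. f y2 x - f y1 x)"
    by (intro continuous_intros contL y)
  have 1: "f y2 x1 - f y1 x1 \<le> 0" using d1 y x unfolding monotone_on_def by (auto simp: less_imp_le)
  have 2: "0 \<le> f y2 x2 - f y1 x2" using d2 y x unfolding monotone_on_def by (auto simp: less_imp_le)
  obtain t where t: "t \<in> I" "f y2 t - f y1 t = 0" using ivt_conn[OF conn c x(1) x(2) 1 2] by auto
  then have "y2 = y1" using injR[OF t(1)] y unfolding inj_on_def by auto
  then show False using y by simp
qed

lemma monoR: "c \<in> I \<Longrightarrow> strict_mono_on I (\<lambda>x. f x c)"
proof -
  assume c: "c \<in> I"
  have "\<not> (\<forall>y\<in>I. strict_antimono_on I (\<lambda>x. f x y))"
  proof
    assume A: "\<forall>y\<in>I. strict_antimono_on I (\<lambda>x. f x y)"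
    obtain y1 y2 where y: "y1 \<in> I" "y2 \<in> I" "y1 < y2" by (rule two_pts)
    have "f y2 c < f y1 c" using A c y unfolding monotone_on_def by auto
    then have "f (f y1 c) c < f (f y2 c) c" using A c y closed unfolding monotone_on_def by auto
    moreover have "f y2 (f c c) < f y1 (f c c)" using A c y closed unfolding monotone_on_def by auto
    ultimately show False using assoc c y by simp
  qed
  then show ?thesis using R_dir c by blast
qed

lemma lessL: "x \<in> I \<Longrightarrow> y \<in> I \<Longrightarrow> z \<in> I \<Longrightarrow> f x y < f x z \<longleftrightarrow> y < z"
  using monoL[of x] by (metis linorder_neq_iff order_less_asym strict_mono_onD)

lemma lessR: "x \<in> I \<Longrightarrow> y \<in> I \<Longrightarrow> z \<in> I \<Longrightarrow> f y x < f z x \<longleftrightarrow> y < z"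
  using monoR[of x] by (metis (no_types, lifting) linorder_neq_iff order_less_asym strict_mono_onD)

lemma leL: "x \<in> I \<Longrightarrow> y \<in> I \<Longrightarrow> z \<in> I \<Longrightarrow> f x y \<le> f x z \<longleftrightarrow> y \<le> z"
  using lessL by (meson not_le)

lemma leR: "x \<in> I \<Longrightarrow> y \<in> I \<Longrightarrow> z \<in> I \<Longrightarrow> f y x \<le> f z x \<longleftrightarrow> y \<le> z"
  using lessR by (meson not_le)

lemma eqL: "x \<in> I \<Longrightarrow> y \<in> I \<Longrightarrow> z \<in> I \<Longrightarrow> f x y = f x z \<longleftrightarrow> y = z"
  using injL unfolding inj_on_def by blast

lemma eqR: "x \<in> I \<Longrightarrow> y \<in> I \<Longrightarrow> z \<in> I \<Longrightarrow> f y x = f z x \<longleftrightarrow> y = z"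
  using injR unfolding inj_on_def by blast


lemma pw_in: "x \<in> I \<Longrightarrow> pw f n x \<in> I"
  by (induction n) (auto intro: closed)

lemma rs_in: "x \<in> I \<Longrightarrow> c \<in> I \<Longrightarrow> rs f c n x \<in> I"
  by (induction n) (auto intro: closed)

lemma pw_Suc': "x \<in> I \<Longrightarrow> pw f (Suc n) x = f (pw f n x) x"
proof (induction n)
  case 0 then show ?case by simp
next
  case (Suc n)
  have "pw f (Suc (Suc n)) x = f x (f (pw f n x) x)" using Suc by simp
  also have "\<dots> = f (f x (pw f n x)) x" using assoc Suc.prems pw_in by simp
  finally show ?case by simp
qed

lemma pw_add: "x \<in> I \<Longrightarrow> f (pw f m x) (pw f n x) = pw f (m+n+1) x"
proof (induction m)
  case 0 then show ?case by simp
next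
  case (Suc m)
  have "f (pw f (Suc m) x) (pw f n x) = f x (f (pw f m x) (pw f n x))"
    using assoc Suc.prems pw_in by simp
  also have "\<dots> = pw f (Suc m + n + 1) x" using Suc by simp
  finally show ?case .
qed

lemma pw_mult: "x \<in> I \<Longrightarrow> pw f n (pw f m x) = pw f (n*m+n+m) x"
proof (induction n)
  case 0 then show ?case by simp
next
  case (Suc n)
  have "pw f (Suc n) (pw f m x) = f (pw f m x) (pw f (n*m+n+m) x)" using Suc by simp
  also have "\<dots> = pw f (m + (n*m+n+m) + 1) x" using pw_add Suc.prems by simp
  also have "m + (n*m+n+m) + 1 = Suc n * m + Suc n + m" by simp
  finally show ?case .
qed

lemma pw_strict: "x \<in> I \<Longrightarrow> y \<in> I \<Longrightarrow> x < y \<Longrightarrow> pw f n x < pw f n y"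
proof (induction n)
  case 0 then show ?case by simp
next
  case (Suc n)
  have "f x (pw f n x) < f y (pw f n x)" using lessR Suc pw_in by simp
  also have "\<dots> < f y (pw f n y)" using lessL Suc pw_in by simp
  finally show ?case by simp
qed

lemma pw_less_iff: "x \<in> I \<Longrightarrow> y \<in> I \<Longrightarrow> pw f n x < pw f n y \<longleftrightarrow> x < y"
  using pw_strict by (metis linorder_neq_iff order_less_asym)

lemma pw_le_iff: "x \<in> I \<Longrightarrow> y \<in> I \<Longrightarrow> pw f n x \<le> pw f n y \<longleftrightarrow> x \<le> y"
  using pw_less_iff by (meson not_le)

lemma pw_eq_iff: "x \<in> I \<Longrightarrow> y \<in> I \<Longrightarrow> pw f n x = pw f n y \<longleftrightarrow> x = y"
  by (metis order_antisym order_refl pw_le_iff)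

lemma pw_cont: "continuous_on I (pw f n)"
proof (induction n)
  case 0 then show ?case by (simp add: continuous_on_id')
next
  case (Suc n)
  have "continuous_on I (\<lambda>x. (\<lambda>p. f (fst p) (snd p)) ((\<lambda>x. (x, pw f n x)) x))"
    by (rule continuous_on_compose2[OF cont]) (auto intro!: continuous_intros Suc pw_in)
  then show ?case by simp
qed

lemma rs_cont: "c \<in> I \<Longrightarrow> continuous_on I (rs f c n)"
proof (induction n)
  case 0 then show ?case by (simp add: continuous_on_id')
next
  case (Suc n)
  have "continuous_on I (\<lambda>x. (\<lambda>p. f (fst p) (snd p)) ((\<lambda>x. (rs f c n x, c)) x))"
    by (rule continuous_on_compose2[OF cont]) (auto intro!: continuous_intros Suc rs_in)
  then show ?case by simp
qed

lemma rs_strict: "c \<in> I \<Longrightarrow> x \<in> I \<Longrightarrow> y \<in> I \<Longrightarrow> x < y \<Longrightarrow> rs f c n x < rs f c n y"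
  by (induction n) (auto simp: lessR rs_in)

lemma rs_Suc_pw: "x \<in> I \<Longrightarrow> c \<in> I \<Longrightarrow> rs f c (Suc k) x = f x (pw f k c)"
proof (induction k)
  case 0 then show ?case by simp
next
  case (Suc k)
  have "rs f c (Suc (Suc k)) x = f (f x (pw f k c)) c" using Suc by simp
  also have "\<dots> = f x (f (pw f k c) c)" using assoc Suc.prems pw_in by simp
  also have "\<dots> = f x (pw f (Suc k) c)" using pw_Suc' Suc.prems by simp
  finally show ?case .
qed

lemma comm_pw: "x \<in> I \<Longrightarrow> y \<in> I \<Longrightarrow> f x y = f y x \<Longrightarrow> f x (pw f n y) = f (pw f n y) x"
proof (induction n)
  case 0 then show ?case by simp
next
  case (Suc n)
  have P: "pw f n y \<in> I" using pw_in Suc by simp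
  have "f x (pw f (Suc n) y) = f (f x y) (pw f n y)" using assoc Suc.prems(1,2) P by simp
  also have "\<dots> = f (f y x) (pw f n y)" using Suc.prems by simp
  also have "\<dots> = f y (f x (pw f n y))" using assoc Suc.prems(1,2) P by simp
  also have "\<dots> = f y (f (pw f n y) x)" using Suc by simp
  also have "\<dots> = f (pw f (Suc n) y) x" using assoc Suc.prems(1,2) P by simp
  finally show ?case .
qed

lemma pw_comm_less: "x \<in> I \<Longrightarrow> y \<in> I \<Longrightarrow> f x y < f y x \<Longrightarrow> f (pw f n x) y < f y (pw f n x)"
proof (induction n)
  case 0 then show ?case by simp
next
  case (Suc n)
  have P: "pw f n x \<in> I" using pw_in Suc by simp
  have "f (pw f (Suc n) x) y = f x (f (pw f n x) y)" using assoc Suc.prems P by simp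
  also have "\<dots> < f x (f y (pw f n x))" using lessL Suc P closed by simp
  also have "\<dots> = f (f x y) (pw f n x)" using assoc Suc.prems P by simp
  also have "\<dots> < f (f y x) (pw f n x)" using lessR Suc P closed by simp
  also have "\<dots> = f y (pw f (Suc n) x)" using assoc Suc.prems P by simp
  finally show ?case .
qed

lemma pw_comm_gt: "x \<in> I \<Longrightarrow> y \<in> I \<Longrightarrow> f y x < f x y \<Longrightarrow> f y (pw f n x) < f (pw f n x) y"
proof (induction n)
  case 0 then show ?case by simp
next
  case (Suc n)
  have P: "pw f n x \<in> I" using pw_in Suc by simp
  have "f y (pw f (Suc n) x) = f (f y x) (pw f n x)" using assoc Suc.prems P by simp
  also have "\<dots> < f (f x y) (pw f n x)" using lessR Suc P closed by simp
  also have "\<dots> = f x (f y (pw f n x))" using assoc Suc.prems P by simp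
  also have "\<dots> < f x (f (pw f n x) y)" using lessL Suc P closed by simp
  also have "\<dots> = f (pw f (Suc n) x) y" using assoc Suc.prems P by simp
  finally show ?case .
qed

lemma comm_of_pw: "x \<in> I \<Longrightarrow> y \<in> I \<Longrightarrow> f (pw f n x) y = f y (pw f n x) \<Longrightarrow> f x y = f y x"
  using pw_comm_less[of x y n] pw_comm_gt[of x y n] by (metis linorder_neq_iff order_less_irrefl)

lemma pw_distrib: "x \<in> I \<Longrightarrow> y \<in> I \<Longrightarrow> f x y = f y x \<Longrightarrow> pw f n (f x y) = f (pw f n x) (pw f n y)"
proof (induction n)
  case 0 then show ?case by simp
next
  case (Suc n)
  have P: "pw f n x \<in> I" and Q: "pw f n y \<in> I" using pw_in Suc by auto
  have c: "f y (pw f n x) = f (pw f n x) y" using comm_pw[of y x n] Suc by simp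
  have "pw f (Suc n) (f x y) = f (f x y) (f (pw f n x) (pw f n y))" using Suc by simp
  also have "\<dots> = f x (f (f y (pw f n x)) (pw f n y))" using assoc Suc.prems(1,2) P Q closed by simp
  also have "\<dots> = f x (f (f (pw f n x) y) (pw f n y))" using c by simp
  also have "\<dots> = f (pw f (Suc n) x) (pw f (Suc n) y)" using assoc Suc.prems(1,2) P Q closed by simp
  finally show ?case .
qed

lemma idem_left_id: "e \<in> I \<Longrightarrow> f e e = e \<Longrightarrow> y \<in> I \<Longrightarrow> f e y = y"
  using assoc[of e e y] eqL[of e "f e y" y] closed by simp

lemma idem_right_id: "e \<in> I \<Longrightarrow> f e e = e \<Longrightarrow> y \<in> I \<Longrightarrow> f y e = y"
  using assoc[of y e e] eqR[of e "f y e" y] closed by simp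

lemma idem_unique: "e \<in> I \<Longrightarrow> f e e = e \<Longrightarrow> e' \<in> I \<Longrightarrow> f e' e' = e' \<Longrightarrow> e = e'"
  using idem_left_id[of e e'] idem_right_id[of e' e] by simp

lemma posL: "b \<in> I \<Longrightarrow> b < f b b \<Longrightarrow> y \<in> I \<Longrightarrow> y < f b y"
proof (rule ccontr)
  assume h: "b \<in> I" "b < f b b" "y \<in> I" "\<not> y < f b y"
  then have "f b (f b y) \<le> f b y" using leL closed by simp
  then have "f (f b b) y \<le> f b y" using assoc h by simp
  then have "f b b \<le> b" using leR h closed by simp
  then show False using h by simp
qed

lemma posR: "b \<in> I \<Longrightarrow> b < f b b \<Longrightarrow> y \<in> I \<Longrightarrow> y < f y b"
proof (rule ccontr)
  assume h: "b \<in> I" "b < f b b" "y \<in> I" "\<not> y < f y b"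
  then have "f (f y b) b \<le> f y b" using leR closed by simp
  then have "f y (f b b) \<le> f y b" using assoc h by simp
  then have "f b b \<le> b" using leL h closed by simp
  then show False using h by simp
qed

lemma unbounded:
  assumes g: "continuous_on I g" "\<And>z. z \<in> I \<Longrightarrow> g z \<in> I \<and> z < g z"
    and X: "X 0 \<in> I" "\<And>k. X (Suc k) = g (X k)" and t: "t \<in> I"
  shows "\<exists>k. t < X k"
proof (rule ccontr)
  assume "\<not> ?thesis"
  then have le: "\<And>k. X k \<le> t" by (simp add: not_less)
  have XI: "X k \<in> I" for k by (induction k) (use X g in auto)
  have inc: "incseq X" using XI g X by (intro incseq_SucI) (simp add: less_imp_le)
  have bdd: "bdd_above (range X)" using le by (intro bdd_aboveI[of _ t]) auto
  have lim: "X \<longlonglongrightarrow> (SUP k. X k)" using LIMSEQ_incseq_SUP[OF bdd inc] .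
  define c where "c = (SUP k. X k)"
  have "X 0 \<le> c" unfolding c_def using cSUP_upper[of 0 UNIV X] bdd by simp
  moreover have "c \<le> t" unfolding c_def using le by (simp add: cSUP_least)
  ultimately have cI: "c \<in> I" using X(1) t intv unfolding is_interval_1 by blast
  have "(\<lambda>k. g (X k)) \<longlonglongrightarrow> g c"
    using continuous_on_tendsto_compose[OF g(1) lim[folded c_def] cI] XI by simp
  moreover have "(\<lambda>k. g (X k)) \<longlonglongrightarrow> c"
    using LIMSEQ_Suc[OF lim[folded c_def]] X(2) by simp
  ultimately have "g c = c" using LIMSEQ_unique by blast
  then show False using g(2)[OF cI] by simp
qed


lemma between: "a \<in> I \<Longrightarrow> c \<in> I \<Longrightarrow> a \<le> z \<Longrightarrow> z \<le> c \<Longrightarrow> z \<in> I"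
  using is_interval_1[THEN iffD1, OF intv] by blast

lemma Icc_sub: "a \<in> I \<Longrightarrow> c \<in> I \<Longrightarrow> {a..c} \<subseteq> I"
  using between by (meson atLeastAtMost_iff subsetI)

lemma lim_f:
  assumes "X \<longlonglongrightarrow> x" "Y \<longlonglongrightarrow> y" "x \<in> I" "y \<in> I" "\<And>k. X k \<in> I" "\<And>k. Y k \<in> I"
  shows "(\<lambda>k. f (X k) (Y k)) \<longlonglongrightarrow> f x y"
proof -
  have "(\<lambda>k. (X k, Y k)) \<longlonglongrightarrow> (x, y)" using assms by (intro tendsto_Pair)
  then have "(\<lambda>k. (\<lambda>p. f (fst p) (snd p)) (X k, Y k)) \<longlonglongrightarrow> (\<lambda>p. f (fst p) (snd p)) (x, y)"
    using continuous_on_tendsto_compose[OF cont, of "\<lambda>k. (X k, Y k)" "(x,y)" sequentially] assms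
    by auto
  then show ?thesis by simp
qed

lemma conv_inc:
  assumes "\<And>k. X k \<in> I" "incseq X" "\<And>k. X k \<le> t" "t \<in> I"
  shows "\<exists>c\<in>I. X \<longlonglongrightarrow> c \<and> c \<le> t \<and> (\<forall>k. X k \<le> c)"
proof -
  have bdd: "bdd_above (range X)" using assms by (intro bdd_aboveI[of _ t]) auto
  have lim: "X \<longlonglongrightarrow> (SUP k. X k)" using LIMSEQ_incseq_SUP[OF bdd assms(2)] .
  have up: "X k \<le> (SUP k. X k)" for k by (rule cSUP_upper[OF UNIV_I bdd])
  have le: "(SUP k. X k) \<le> t" using assms(3) by (simp add: cSUP_least)
  have "(SUP k. X k) \<in> I" using up[of 0] le assms(1)[of 0] assms(4) intv unfolding is_interval_1 by blast
  then show ?thesis using lim up le by blast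
qed

lemma conv_dec:
  assumes "\<And>k. X k \<in> I" "decseq X" "\<And>k. t \<le> X k" "t \<in> I"
  shows "\<exists>c\<in>I. X \<longlonglongrightarrow> c \<and> t \<le> c \<and> (\<forall>k. c \<le> X k)"
proof -
  have bdd: "bdd_below (range X)" using assms by (intro bdd_belowI[of _ t]) auto
  have lim: "X \<longlonglongrightarrow> (INF k. X k)" using LIMSEQ_decseq_INF[OF bdd assms(2)] .
  have lo: "(INF k. X k) \<le> X k" for k by (rule cINF_lower[OF bdd UNIV_I])
  have le: "t \<le> (INF k. X k)" using assms(3) by (simp add: cINF_greatest)
  have "(INF k. X k) \<in> I" using lo[of 0] le assms(1)[of 0] assms(4) intv unfolding is_interval_1 by blast
  then show ?thesis using lim lo le by blast
qed

end

locale aczelP = aczel +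
  fixes b :: real
  assumes bI: "b \<in> I" and bP: "b < f b b"
begin

lemma KP: "z \<in> I \<Longrightarrow> b \<le> z \<Longrightarrow> z < f z z"
proof -
  assume z: "z \<in> I" "b \<le> z"
  have "f b z \<le> f z z" using leR z bI by simp
  moreover have "z < f b z" using posL[OF bI bP z(1)] .
  ultimately show ?thesis by simp
qed

lemma KL: "z \<in> I \<Longrightarrow> b \<le> z \<Longrightarrow> y \<in> I \<Longrightarrow> y < f z y"
  using posL KP by blast

lemma KR: "z \<in> I \<Longrightarrow> b \<le> z \<Longrightarrow> y \<in> I \<Longrightarrow> y < f y z"
  using posR KP by blast

lemma K_closed: "x \<in> I \<Longrightarrow> b \<le> x \<Longrightarrow> y \<in> I \<Longrightarrow> b \<le> y \<Longrightarrow> b \<le> f x y"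
  using KL[of x y] by simp

lemma pwb_Suc: "pw f n b < pw f (Suc n) b"
  using posL[OF bI bP pw_in[OF bI]] by simp

lemma pwb_strict: "m < n \<Longrightarrow> pw f m b < pw f n b"
  using lift_Suc_mono_less[of "\<lambda>n. pw f n b", OF pwb_Suc] by blast

lemma pwb_less_iff: "pw f m b < pw f n b \<longleftrightarrow> m < n"
  using pwb_strict by (metis linorder_neq_iff order_less_asym)

lemma pwb_le_iff: "pw f m b \<le> pw f n b \<longleftrightarrow> m \<le> n"
  using pwb_less_iff by (meson not_le)

lemma b_le_pw: "b \<le> pw f n b"
  using pwb_le_iff[of 0 n] by simp

lemma le_pw: "z \<in> I \<Longrightarrow> b \<le> z \<Longrightarrow> z \<le> pw f n z"
proof (induction n)
  case 0 then show ?case by simp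
next
  case (Suc n)
  have "pw f n z < pw f (Suc n) z" using KL Suc.prems pw_in by simp
  then show ?case using Suc by simp
qed

lemma unb_pw: "t \<in> I \<Longrightarrow> \<exists>k. t < pw f k b"
  by (rule unbounded[of "f b" "\<lambda>k. pw f k b"])
     (auto simp: contL bI closed posL[OF bI bP])

lemma unb_rs: "x \<in> I \<Longrightarrow> t \<in> I \<Longrightarrow> \<exists>k. t < rs f b k x"
  by (rule unbounded[of "\<lambda>z. f z b" "\<lambda>k. rs f b k x"])
     (auto simp: contR bI closed posR[OF bI bP])

lemma div_lemma:
  assumes a: "a \<in> I" "b \<le> a" and y: "y \<in> I" "f a b \<le> y"
  shows "\<exists>z\<in>I. b \<le> z \<and> z \<le> y \<and> f a z = y"
proof -
  have "b < f a b" using KL[of a b] a bI by simp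
  then have hby: "b \<le> y" using y by simp
  have sub: "{b..y} \<subseteq> I" using Icc_sub bI y(1) by blast
  have "y < f a y" using KL a y by simp
  moreover have "continuous_on {b..y} (f a)" using contL[OF a(1)] sub continuous_on_subset by blast
  ultimately obtain z where z: "b \<le> z" "z \<le> y" "f a z = y"
    using IVT'[of "f a" b y y] y hby by auto
  then show ?thesis using sub by auto
qed

definition root :: "nat \<Rightarrow> real \<Rightarrow> real" where
  "root n w = (SOME z. z \<in> I \<and> b \<le> z \<and> pw f n z = w)"

lemma root_ex: "w \<in> I \<Longrightarrow> pw f n b \<le> w \<Longrightarrow> \<exists>z\<in>I. b \<le> z \<and> pw f n z = w"
proof -
  assume w: "w \<in> I" "pw f n b \<le> w"
  have bw: "b \<le> w" using b_le_pw[of n] w by simp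
  have sub: "{b..w} \<subseteq> I" using Icc_sub bI w(1) by blast
  have "w \<le> pw f n w" using le_pw w bw by simp
  moreover have "continuous_on {b..w} (pw f n)" using pw_cont sub continuous_on_subset by blast
  ultimately obtain z where "b \<le> z" "z \<le> w" "pw f n z = w"
    using IVT'[of "pw f n" b w w] w bw by auto
  then show ?thesis using sub by auto
qed

lemma root_prop: "w \<in> I \<Longrightarrow> pw f n b \<le> w \<Longrightarrow> root n w \<in> I \<and> b \<le> root n w \<and> pw f n (root n w) = w"
  unfolding root_def using someI_ex[OF root_ex[unfolded Bex_def]] by blast

definition E :: "nat \<Rightarrow> nat \<Rightarrow> real" where
  "E m n = root n (pw f (n+m) b)"

lemma E_prop: "E m n \<in> I" "b \<le> E m n" "pw f n (E m n) = pw f (n+m) b"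
  using root_prop[of "pw f (n+m) b" n] pw_in[OF bI] pwb_le_iff[of n "n+m"] unfolding E_def by auto

lemma E_unique: assumes "z \<in> I" "pw f n z = pw f (n+m) b" shows "E m n = z"
proof -
  have "pw f n (E m n) = pw f n z" using E_prop(3) assms(2) by simp
  then show ?thesis using pw_eq_iff E_prop(1) assms(1) by blast
qed

lemma E_zero: "E 0 n = b"
  using E_unique[of b n 0] bI by simp

lemma E_pw: "E ((n+1)*k) n = pw f k b"
proof (rule E_unique)
  show "pw f k b \<in> I" using pw_in bI by simp
  have "pw f n (pw f k b) = pw f (n*k+n+k) b" using pw_mult bI by simp
  also have "n*k+n+k = n + (n+1)*k" by simp
  finally show "pw f n (pw f k b) = pw f (n + (n+1)*k) b" .
qed

lemma comm_b_pw: "f b (pw f k b) = f (pw f k b) b"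
  using comm_pw[of b b k] bI by simp

lemma E_comm_b: "f (E m n) b = f b (E m n)"
proof (rule comm_of_pw[of _ _ n])
  show "E m n \<in> I" "b \<in> I" using E_prop bI by auto
  show "f (pw f n (E m n)) b = f b (pw f n (E m n))" using comm_b_pw E_prop by simp
qed

lemma comm_E_pwb: "f (E m n) (pw f k b) = f (pw f k b) (E m n)"
  using comm_pw[of "E m n" b k] E_prop bI E_comm_b by simp

lemma comm_E: "f (E m n) (E m' n') = f (E m' n') (E m n)"
proof (rule comm_of_pw[of _ _ n])
  show "E m n \<in> I" "E m' n' \<in> I" using E_prop by auto
  show "f (pw f n (E m n)) (E m' n') = f (E m' n') (pw f n (E m n))"
    using comm_E_pwb[of m' n' "n+m"] E_prop by simp
qed

lemma E_pow_common: "pw f (n'*n+n'+n) (E m n) = pw f (n'*(n+m) + n' + (n+m)) b"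
proof -
  have "pw f (n'*n+n'+n) (E m n) = pw f n' (pw f n (E m n))" using pw_mult[of "E m n" n' n] E_prop(1) by simp
  also have "\<dots> = pw f n' (pw f (n+m) b)" using E_prop by simp
  also have "\<dots> = pw f (n'*(n+m) + n' + (n+m)) b" using pw_mult bI by simp
  finally show ?thesis .
qed

lemma E_le_iff: "E m n \<le> E m' n' \<longleftrightarrow> m*(n'+1) \<le> m'*(n+1)"
proof -
  have "E m n \<le> E m' n' \<longleftrightarrow> pw f (n'*n+n'+n) (E m n) \<le> pw f (n'*n+n'+n) (E m' n')"
    using pw_le_iff E_prop by simp
  also have "pw f (n'*n+n'+n) (E m' n') = pw f (n*n'+n+n') (E m' n')" by (simp add: algebra_simps)
  also have "pw f (n'*n+n'+n) (E m n) \<le> pw f (n*n'+n+n') (E m' n') \<longleftrightarrow>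
     n'*(n+m) + n' + (n+m) \<le> n*(n'+m') + n + (n'+m')"
    using E_pow_common[of n' n m] E_pow_common[of n n' m'] pwb_le_iff by simp
  also have "\<dots> \<longleftrightarrow> m*(n'+1) \<le> m'*(n+1)" by (simp add: algebra_simps)
  finally show ?thesis .
qed

lemma E_less_iff: "E m n < E m' n' \<longleftrightarrow> m*(n'+1) < m'*(n+1)"
  using E_le_iff[of m' n' m n] by (simp add: not_le[symmetric])

lemma E_mult: "f (E m n) (E m' n) = E (m+m'+n+1) n"
proof (rule E_unique[symmetric])
  show "f (E m n) (E m' n) \<in> I" using E_prop closed by simp
  have "pw f n (f (E m n) (E m' n)) = f (pw f n (E m n)) (pw f n (E m' n))"
    by (rule pw_distrib[OF E_prop(1) E_prop(1) comm_E])
  also have "\<dots> = f (pw f (n+m) b) (pw f (n+m') b)" using E_prop by simp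
  also have "\<dots> = pw f ((n+m)+(n+m')+1) b" using pw_add bI by blast
  also have "(n+m)+(n+m')+1 = n + (m+m'+n+1)" by simp
  finally show "pw f n (f (E m n) (E m' n)) = pw f (n + (m+m'+n+1)) b" .
qed

lemma E_b: "f (E m n) b = E (m+n+1) n"
  using E_mult[of m n 0] E_zero by simp

end

lemma le_zero_of_bounds:
  fixes t c :: real
  assumes "\<And>n::nat. t \<le> c / real (n+1)"
  shows "t \<le> 0"
proof (rule ccontr)
  assume "\<not> t \<le> 0" then have t: "t > 0" by simp
  obtain n :: nat where n: "c / t < real n" using reals_Archimedean2 by blast
  have "c / t < real (n+1)" using n by simp
  then have "c < t * real (n+1)" using t by (simp add: divide_less_eq mult.commute)
  then have "c / real (n+1) < t" by (simp add: divide_less_eq)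
  then show False using assms[of n] by simp
qed

lemma zero_of_bounds:
  fixes t c :: real
  assumes "\<And>n::nat. \<bar>t\<bar> \<le> c / real (n+1)"
  shows "t = 0"
proof -
  have "\<bar>t\<bar> \<le> 0" using le_zero_of_bounds[of "\<bar>t\<bar>" c] assms by blast
  then show ?thesis by simp
qed

lemma bracket_mul:
  fixes q r p :: real
  assumes "q > 0" "1 + (r - 1)/q \<le> p" "p \<le> 1 + r/q"
  shows "r - 1 \<le> (p - 1)*q \<and> (p-1)*q \<le> r"
proof -
  have "(r-1)/q \<le> p - 1" "p - 1 \<le> r/q" using assms by auto
  then show ?thesis using assms(1) by (simp add: pos_divide_le_eq pos_le_divide_eq)
qed

context aczelP
begin

lemma E1_dec: "E 1 (Suc n) < E 1 n"
  using E_less_iff by simp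

lemma dens:
  assumes dI: "d \<in> I" and bd: "b < d"
  shows "\<exists>n. E 1 n < d"
proof (rule ccontr)
  assume "\<not> ?thesis"
  then have dle: "\<And>n. d \<le> E 1 n" by (simp add: not_less)
  have dec: "decseq (\<lambda>n. E 1 n)" using E1_dec by (intro decseq_SucI) (simp add: less_imp_le)
  obtain L where L: "L \<in> I" "(\<lambda>n. E 1 n) \<longlonglongrightarrow> L" "d \<le> L" "\<forall>k. L \<le> E 1 k"
    using conv_dec[of "\<lambda>n. E 1 n" d] E_prop dec dle dI by auto
  have Lb: "b < L" using L bd by simp
  have commL: "f L b = f b L"
  proof -
    have "(\<lambda>k. f (E 1 k) b) \<longlonglongrightarrow> f L b" using lim_f[OF L(2) tendsto_const L(1) bI] E_prop bI by auto
    moreover have "(\<lambda>k. f b (E 1 k)) \<longlonglongrightarrow> f b L" using lim_f[OF tendsto_const L(2) bI L(1)] E_prop bI by auto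
    moreover have "(\<lambda>k. f (E 1 k) b) = (\<lambda>k. f b (E 1 k))" using E_comm_b by simp
    ultimately show ?thesis using LIMSEQ_unique by metis
  qed
  have commLp: "f L (pw f n b) = f (pw f n b) L" for n using comm_pw[OF L(1) bI commL] .
  have pwL: "pw f n L \<le> pw f (Suc n) b" for n
  proof -
    have "pw f n L \<le> pw f n (E 1 n)" by (metis pw_le_iff L(1) L(4) E_prop(1))
    then show ?thesis using E_prop(3)[of n 1] by simp
  qed
  have wex: "\<exists>w\<in>I. b \<le> w \<and> w \<le> pw f (Suc n) L \<and> f (pw f n b) w = pw f (Suc n) L" for n
  proof (rule div_lemma)
    show "pw f n b \<in> I" "b \<le> pw f n b" using pw_in bI b_le_pw by auto
    show "pw f (Suc n) L \<in> I" by (rule pw_in[OF L(1)])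
    have "f (pw f n b) b = pw f (Suc n) b" using pw_Suc'[OF bI] by simp
    also have "\<dots> \<le> pw f (Suc n) L" by (metis pw_le_iff bI L(1) Lb less_imp_le)
    finally show "f (pw f n b) b \<le> pw f (Suc n) L" .
  qed
  define w where "w n = (SOME w. w\<in>I \<and> b \<le> w \<and> w \<le> pw f (Suc n) L \<and> f (pw f n b) w = pw f (Suc n) L)" for n
  have w: "w n \<in> I" "b \<le> w n" "f (pw f n b) (w n) = pw f (Suc n) L" for n
    using someI_ex[OF wex[of n, unfolded Bex_def]] unfolding w_def by auto
  have wI: "w n \<in> I" for n using w by simp
  have rec: "f b (w (Suc n)) = f L (w n)" for n
  proof -
    have P: "pw f n b \<in> I" using pw_in bI by simp
    have "f (pw f n b) (f b (w (Suc n))) = f (f (pw f n b) b) (w (Suc n))" using assoc P bI wI by simp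
    also have "\<dots> = f (pw f (Suc n) b) (w (Suc n))" using pw_Suc'[OF bI] by simp
    also have "\<dots> = pw f (Suc (Suc n)) L" by (rule w(3))
    also have "\<dots> = f L (f (pw f n b) (w n))" using w(3)[of n] by (simp only: pw.simps(2)[of f "Suc n"])
    also have "\<dots> = f (f L (pw f n b)) (w n)" using assoc L(1) P wI by simp
    also have "\<dots> = f (f (pw f n b) L) (w n)" using commLp by simp
    also have "\<dots> = f (pw f n b) (f L (w n))" using assoc L(1) P wI by simp
    finally show ?thesis using eqL[OF P] closed bI wI L(1) by simp
  qed
  have inc: "w n < w (Suc n)" for n
  proof -
    have "f b (w n) < f L (w n)" using lessR wI bI L(1) Lb by simp
    then have "f b (w n) < f b (w (Suc n))" using rec by simp
    then show ?thesis using lessL bI wI by simp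
  qed
  have bnd: "w n \<le> f L b" for n
  proof -
    have P: "pw f n b \<in> I" using pw_in bI by simp
    have "f (pw f n b) (w n) = f L (pw f n L)" using w(3)[of n] by (simp only: pw.simps(2))
    also have "\<dots> \<le> f L (pw f (Suc n) b)" by (metis leL L(1) pw_in bI pwL)
    also have "\<dots> = f L (f (pw f n b) b)" using pw_Suc'[OF bI] by simp
    also have "\<dots> = f (f L (pw f n b)) b" using assoc L(1) P bI by simp
    also have "\<dots> = f (f (pw f n b) L) b" using commLp by simp
    also have "\<dots> = f (pw f n b) (f L b)" using assoc L(1) P bI by simp
    finally show ?thesis using leL P wI closed L(1) bI by simp
  qed
  have incs: "incseq w" using inc by (intro incseq_SucI) (simp add: less_imp_le)
  obtain c where c: "c \<in> I" "w \<longlonglongrightarrow> c"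
    using conv_inc[of w "f L b", OF wI incs bnd] closed L(1) bI by auto
  have "(\<lambda>n. f b (w (Suc n))) \<longlonglongrightarrow> f b c"
    using lim_f[OF tendsto_const LIMSEQ_Suc[OF c(2)] bI c(1)] bI wI by auto
  moreover have "(\<lambda>n. f L (w n)) \<longlonglongrightarrow> f L c"
    using lim_f[OF tendsto_const c(2) L(1) c(1)] L(1) wI by auto
  ultimately have "f b c = f L c" using rec LIMSEQ_unique by simp
  then have "b = L" using eqR c(1) bI L(1) by simp
  then show False using Lb by simp
qed


definition N :: "nat \<Rightarrow> real \<Rightarrow> nat" where
  "N n x = (LEAST m. x < E m n)"

lemma N_ex: "x \<in> I \<Longrightarrow> \<exists>m. x < E m n"
proof -
  assume "x \<in> I"
  then obtain k where "x < pw f k b" using unb_pw by blast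
  then show ?thesis using E_pw[of n k] by metis
qed

lemma N_gt: "x \<in> I \<Longrightarrow> x < E (N n x) n"
  unfolding N_def using LeastI_ex[OF N_ex] by blast

lemma N_le: "x < E m n \<Longrightarrow> N n x \<le> m"
  unfolding N_def by (rule Least_le)

lemma E_mono: "m \<le> m' \<Longrightarrow> E m n \<le> E m' n"
  using E_le_iff[of m n m' n] mult_le_mono1[of m m' "n+1"] by simp

lemma N_lt: "x \<in> I \<Longrightarrow> E m n \<le> x \<Longrightarrow> m < N n x"
proof (rule ccontr)
  assume h: "x \<in> I" "E m n \<le> x" "\<not> m < N n x"
  then have "E (N n x) n \<le> E m n" using E_mono by simp
  then show False using N_gt[OF h(1), of n] h by simp
qed

lemma N_pos: "x \<in> I \<Longrightarrow> b \<le> x \<Longrightarrow> 1 \<le> N n x"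
  using N_lt[of x 0 n] E_zero by simp

lemma N_below: "x \<in> I \<Longrightarrow> b \<le> x \<Longrightarrow> E (N n x - 1) n \<le> x"
proof (rule ccontr)
  assume h: "x \<in> I" "b \<le> x" "\<not> E (N n x - 1) n \<le> x"
  then have "N n x \<le> N n x - 1" using N_le by simp
  then show False using N_pos[OF h(1,2), of n] by simp
qed

definition phi :: "real \<Rightarrow> real" where
  "phi x = 1 + (SUP n. (real (N n x) - 1) / real (n+1))"

lemma ratio_lt:
  assumes x: "x \<in> I" "b \<le> x"
  shows "(real (N k x) - 1) / real (k+1) < real (N n x) / real (n+1)"
proof -
  have "E (N k x - 1) k < E (N n x) n" using N_below[OF x] N_gt[OF x(1)] by (meson le_less_trans)
  then have "(N k x - 1) * (n+1) < N n x * (k+1)" using E_less_iff by simp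
  then have "real ((N k x - 1) * (n+1)) < real (N n x * (k+1))" by (simp only: of_nat_less_iff)
  then have "real (N k x - 1) * real (n+1) < real (N n x) * real (k+1)" by (simp only: of_nat_mult)
  moreover have eq: "real (N k x - 1) = real (N k x) - 1" using N_pos[OF x, of k] by simp
  ultimately have "(real (N k x) - 1) * real (n+1) < real (N n x) * real (k+1)" by metis
  then show ?thesis by (simp add: field_simps)
qed

lemma phi_bdd: "x \<in> I \<Longrightarrow> b \<le> x \<Longrightarrow> bdd_above (range (\<lambda>n. (real (N n x) - 1) / real (n+1)))"
  using ratio_lt[of x _ 0] by (intro bdd_aboveI[of _ "real (N 0 x)"]) (auto simp: less_imp_le)

lemma phi_lo: "x \<in> I \<Longrightarrow> b \<le> x \<Longrightarrow> 1 + (real (N n x) - 1) / real (n+1) \<le> phi x"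
  unfolding phi_def using cSUP_upper[OF UNIV_I phi_bdd] by simp

lemma phi_hi: "x \<in> I \<Longrightarrow> b \<le> x \<Longrightarrow> phi x \<le> 1 + real (N n x) / real (n+1)"
  unfolding phi_def using ratio_lt[of x _ n] by (simp add: cSUP_least less_imp_le)

lemma phi_ge1: "x \<in> I \<Longrightarrow> b \<le> x \<Longrightarrow> 1 \<le> phi x"
  using phi_lo[of x 0] N_pos[of x 0] by simp

lemma phi_add:
  assumes x: "x \<in> I" "b \<le> x" and y: "y \<in> I" "b \<le> y"
  shows "phi (f x y) = phi x + phi y"
proof -
  have xy: "f x y \<in> I" "b \<le> f x y" using closed K_closed x y by auto
  have "\<bar>phi (f x y) - (phi x + phi y)\<bar> \<le> 2 / real (n+1)" for n
  proof -
    define a where "a = N n x"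
    define c where "c = N n y"
    define d where "d = N n (f x y)"
    have a1: "1 \<le> a" "1 \<le> c" using N_pos x y unfolding a_def c_def by auto
    have "f (E (a-1) n) (E (c-1) n) \<le> f x (E (c-1) n)"
      using leR N_below[OF x] E_prop x unfolding a_def by simp
    also have "\<dots> \<le> f x y" using leL N_below[OF y] E_prop x y unfolding c_def by simp
    finally have "E (a-1+(c-1)+n+1) n \<le> f x y" using E_mult by simp
    then have "a-1+(c-1)+n+1 < d" using N_lt xy unfolding d_def by simp
    then have d1: "a + c + n \<le> d" using a1 by simp
    have "f x y < f (E a n) y" using lessR N_gt x y E_prop unfolding a_def by simp
    also have "\<dots> < f (E a n) (E c n)" using lessL N_gt y E_prop unfolding c_def by simp
    finally have "f x y < E (a+c+n+1) n" using E_mult by simp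
    then have d2: "d \<le> a + c + n + 1" using N_le unfolding d_def by simp
    have A: "1 + (real a - 1) / real (n+1) \<le> phi x" "phi x \<le> 1 + real a / real (n+1)"
      using phi_lo[OF x] phi_hi[OF x] unfolding a_def by auto
    have C: "1 + (real c - 1) / real (n+1) \<le> phi y" "phi y \<le> 1 + real c / real (n+1)"
      using phi_lo[OF y] phi_hi[OF y] unfolding c_def by auto
    have D: "1 + (real d - 1) / real (n+1) \<le> phi (f x y)" "phi (f x y) \<le> 1 + real d / real (n+1)"
      using phi_lo[OF xy] phi_hi[OF xy] unfolding d_def by auto
    have d1': "real a + real c + real n \<le> real d" using d1 by linarith
    have d2': "real d \<le> real a + real c + real n + 1" using d2 by linarith
    define q where "q = real (n+1)"
    have np: "q > 0" unfolding q_def by simp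
    have qn: "q = real n + 1" unfolding q_def by simp
    define P where "P = (phi x - 1) * q"
    define C where "C = (phi y - 1) * q"
    define Dd where "Dd = (phi (f x y) - 1) * q"
    have P: "real a - 1 \<le> P \<and> P \<le> real a"
      using bracket_mul[OF np] A unfolding P_def q_def[symmetric] by blast
    have C: "real c - 1 \<le> C \<and> C \<le> real c"
      using bracket_mul[OF np] C unfolding C_def q_def[symmetric] by blast
    have D: "real d - 1 \<le> Dd \<and> Dd \<le> real d"
      using bracket_mul[OF np] D unfolding Dd_def q_def[symmetric] by blast
    have T: "(phi (f x y) - (phi x + phi y)) * q = Dd - P - C - q"
      unfolding P_def C_def Dd_def by (simp add: algebra_simps)
    have "\<bar>(phi (f x y) - (phi x + phi y)) * q\<bar> \<le> 2"
      unfolding T abs_le_iff using P C D d1' d2' qn by linarith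
    then have "\<bar>phi (f x y) - (phi x + phi y)\<bar> * q \<le> 2" using np by (simp add: abs_mult)
    then show ?thesis using np unfolding q_def[symmetric] by (simp add: pos_le_divide_eq)
  qed
  then show ?thesis using zero_of_bounds[of "phi (f x y) - (phi x + phi y)" 2] by simp
qed

lemma N_b: "N n b = 1"
proof -
  have "1 \<le> N n b" using N_pos bI by simp
  moreover have "b < E 1 n" using E_less_iff[of 0 n 1 n] E_zero by simp
  then have "N n b \<le> 1" using N_le by simp
  ultimately show ?thesis by simp
qed

lemma phi_b: "phi b = 1"
proof -
  have "\<bar>phi b - 1\<bar> \<le> 1 / real (n+1)" for n
    using phi_lo[OF bI order_refl, of n] phi_hi[OF bI order_refl, of n] N_b by (simp add: abs_le_iff)
  then show ?thesis using zero_of_bounds[of "phi b - 1" 1] by simp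
qed

lemma phi_strict:
  assumes x: "x \<in> I" "b \<le> x" and y: "y \<in> I" "b \<le> y" and xy: "x < y"
  shows "phi x < phi y"
proof -
  have "f x b \<le> f y b" using leR x y xy bI by simp
  then obtain z where z: "z \<in> I" "b \<le> z" "f x z = f y b"
    using div_lemma[OF x, of "f y b"] closed y bI by auto
  have "z \<noteq> b" using z eqR[of b x y] x y bI xy by auto
  then have bz: "b < z" using z by simp
  obtain n where n: "E 1 n < z" using dens[OF z(1) bz] by auto
  then have "1 < N n z" using N_lt z by simp
  then have "2 \<le> real (N n z)" by linarith
  then have "1 / real (n+1) \<le> (real (N n z) - 1) / real (n+1)"
    by (intro divide_right_mono) auto
  moreover have "0 < 1 / real (n+1)" by simp
  ultimately have pz: "1 < phi z" using phi_lo[OF z(1,2), of n] by linarith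
  have "phi x + phi z = phi y + 1" using phi_add[OF x z(1,2)] phi_add[OF y bI order_refl] z(3) phi_b by simp
  then show ?thesis using pz by simp
qed

lemma phi_mono:
  assumes x: "x \<in> I" "b \<le> x" and y: "y \<in> I" "b \<le> y" and xy: "x \<le> y"
  shows "phi x \<le> phi y"
  using phi_strict[OF x y] xy by (cases "x = y") auto



lemma phi_cont: "continuous_on {x\<in>I. b \<le> x} phi"
  unfolding continuous_on_iff
proof (intro ballI allI impI)
  fix x0 e :: real
  assume x0: "x0 \<in> {x\<in>I. b \<le> x}" and e: "0 < e"
  have x0I: "x0 \<in> I" "b \<le> x0" using x0 by auto
  obtain n :: nat where n: "2 / e < real n" using reals_Archimedean2 by blast
  define q where "q = real (n+1)"
  have np: "q > 0" unfolding q_def by simp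
  have "2 / e < q" using n unfolding q_def by simp
  then have "2 < q * e" using e by (simp add: pos_divide_less_eq)
  then have en: "2 / q < e" using np by (simp add: pos_divide_less_eq mult.commute)
  define a where "a = N n x0"
  have a1: "1 \<le> a" using N_pos[OF x0I] unfolding a_def by simp
  have u: "x0 < E a n" using N_gt[OF x0I(1)] unfolding a_def by simp
  have lowpt: "2 \<le> a \<Longrightarrow> E (a-2) n < x0"
  proof -
    assume "2 \<le> a"
    then have "(a-2)*(n+1) < (a-1)*(n+1)" by (intro mult_strict_right_mono) auto
    then have "E (a-2) n < E (a-1) n" using E_less_iff[of "a-2" n "a-1" n] by blast
    also have "\<dots> \<le> x0" using N_below[OF x0I] unfolding a_def by simp
    finally show ?thesis .
  qed
  define \<delta> where "\<delta> = (if 2 \<le> a then min (E a n - x0) (x0 - E (a-2) n) else E a n - x0)"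
  have dpos: "\<delta> > 0" unfolding \<delta>_def using u lowpt by auto
  have P0: "real a - 1 \<le> (phi x0 - 1) * q \<and> (phi x0 - 1) * q \<le> real a"
    using bracket_mul[OF np] phi_lo[OF x0I, of n] phi_hi[OF x0I, of n] unfolding a_def q_def by blast
  show "\<exists>d>0. \<forall>x'\<in>{x\<in>I. b \<le> x}. dist x' x0 < d \<longrightarrow> dist (phi x') (phi x0) < e"
  proof (intro exI[of _ \<delta>] conjI ballI impI dpos)
    fix x assume xK: "x \<in> {x\<in>I. b \<le> x}" and dx: "dist x x0 < \<delta>"
    have xI: "x \<in> I" "b \<le> x" using xK by auto
    have "x < E a n" using dx unfolding \<delta>_def dist_real_def by (auto split: if_splits)
    then have Nu: "N n x \<le> a" using N_le by simp
    have Nl: "real a - 1 \<le> real (N n x)"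
    proof (cases "2 \<le> a")
      case True
      then have "E (a-2) n < x" using dx unfolding \<delta>_def dist_real_def by auto
      then have "a - 2 < N n x" using N_lt xI by simp
      then show ?thesis using True by linarith
    next
      case False
      then show ?thesis using N_pos[OF xI, of n] by linarith
    qed
    have Px: "real (N n x) - 1 \<le> (phi x - 1) * q \<and> (phi x - 1) * q \<le> real (N n x)"
      using bracket_mul[OF np] phi_lo[OF xI, of n] phi_hi[OF xI, of n] unfolding q_def by blast
    have Nu': "real (N n x) \<le> real a" using Nu by simp
    have T: "(phi x - phi x0) * q = (phi x - 1) * q - (phi x0 - 1) * q" by (simp add: algebra_simps)
    have "\<bar>(phi x - phi x0) * q\<bar> \<le> 2" unfolding T abs_le_iff using P0 Px Nl Nu' by linarith
    then have "\<bar>phi x - phi x0\<bar> * q \<le> 2" using np by (simp add: abs_mult)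
    then have "\<bar>phi x - phi x0\<bar> \<le> 2 / q" using np by (simp add: pos_le_divide_eq)
    then show "dist (phi x) (phi x0) < e" using en unfolding dist_real_def by linarith
  qed
qed

lemma K_comm: "x \<in> I \<Longrightarrow> b \<le> x \<Longrightarrow> y \<in> I \<Longrightarrow> b \<le> y \<Longrightarrow> f x y = f y x"
proof (rule ccontr)
  assume h: "x \<in> I" "b \<le> x" "y \<in> I" "b \<le> y" "f x y \<noteq> f y x"
  have K1: "f x y \<in> I" "b \<le> f x y" using closed K_closed h by auto
  have K2: "f y x \<in> I" "b \<le> f y x" using closed K_closed h by auto
  have "phi (f x y) = phi (f y x)" using phi_add h by simp
  moreover have "phi (f x y) \<noteq> phi (f y x)"
    using phi_strict[OF K1 K2] phi_strict[OF K2 K1] h(5) by (metis linorder_neq_iff order_less_irrefl)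
  ultimately show False by simp
qed

lemma comm_b: "x \<in> I \<Longrightarrow> f x b = f b x"
proof -
  assume x: "x \<in> I"
  obtain k where k: "b < rs f b k x" using unb_rs[OF x bI] by blast
  show ?thesis
  proof (cases k)
    case 0
    then show ?thesis using K_comm[of x b] x k bI by simp
  next
    case (Suc j)
    define P where "P = pw f j b"
    have P: "P \<in> I" unfolding P_def using pw_in bI by simp
    have X: "f x P \<in> I" "b \<le> f x P" using k Suc rs_Suc_pw[OF x bI] closed x P unfolding P_def by auto
    have c: "f (f x P) b = f b (f x P)" using K_comm[OF X bI order_refl] .
    have "f (f x P) b = f (f x b) P"
    proof -
      have "f (f x P) b = f x (f P b)" using assoc x P bI by simp
      also have "\<dots> = f x (f b P)" using comm_b_pw unfolding P_def by simp
      also have "\<dots> = f (f x b) P" using assoc x P bI by simp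
      finally show ?thesis .
    qed
    moreover have "f b (f x P) = f (f b x) P" using assoc x P bI by simp
    ultimately have "f (f x b) P = f (f b x) P" using c by simp
    then show ?thesis using eqR P closed x bI by simp
  qed
qed

lemma rs_inc: "x \<in> I \<Longrightarrow> rs f b k x < rs f b (Suc k) x"
  using posR[OF bI bP rs_in[OF _ bI]] by simp

lemma rs_mono: "x \<in> I \<Longrightarrow> k \<le> k' \<Longrightarrow> rs f b k x \<le> rs f b k' x"
  using lift_Suc_mono_le[of "\<lambda>k. rs f b k x"] rs_inc by (simp add: less_imp_le)

definition kk :: "real \<Rightarrow> nat" where
  "kk x = (LEAST k. b \<le> rs f b k x)"

definition Phi :: "real \<Rightarrow> real" where
  "Phi x = phi (rs f b (kk x) x) - real (kk x)"

lemma Phi_step: "x \<in> I \<Longrightarrow> b \<le> rs f b k x \<Longrightarrow>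
    phi (rs f b (Suc k) x) - real (Suc k) = phi (rs f b k x) - real k"
  using phi_add[OF rs_in[OF _ bI] _ bI order_refl] phi_b by simp

lemma Phi_eq:
  assumes x: "x \<in> I" and j: "b \<le> rs f b j x"
  shows "Phi x = phi (rs f b j x) - real j"
proof -
  define k0 where "k0 = kk x"
  have k0j: "k0 \<le> j" unfolding k0_def kk_def using j by (rule Least_le)
  have k0b: "b \<le> rs f b k0 x" unfolding k0_def kk_def using j by (rule LeastI)
  have "phi (rs f b (k0+d) x) - real (k0+d) = phi (rs f b k0 x) - real k0" for d
  proof (induction d)
    case 0 then show ?case by simp
  next
    case (Suc d)
    have "b \<le> rs f b (k0+d) x" using k0b rs_mono[OF x, of k0 "k0+d"] by simp
    then show ?case using Phi_step[OF x, of "k0+d"] Suc by simp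
  qed
  from this[of "j - k0"] k0j show ?thesis unfolding Phi_def k0_def[symmetric] by simp
qed

lemma Phi_strict: "x \<in> I \<Longrightarrow> y \<in> I \<Longrightarrow> x < y \<Longrightarrow> Phi x < Phi y"
proof -
  assume h: "x \<in> I" "y \<in> I" "x < y"
  obtain k where k: "b < rs f b k x" using unb_rs[OF h(1) bI] by blast
  have "rs f b k x < rs f b k y" using rs_strict bI h by simp
  then have "phi (rs f b k x) < phi (rs f b k y)"
    using phi_strict rs_in h bI k by simp
  moreover have "Phi x = phi (rs f b k x) - real k" using Phi_eq h k by simp
  moreover have "Phi y = phi (rs f b k y) - real k" using Phi_eq h k \<open>rs f b k x < rs f b k y\<close> by simp
  ultimately show ?thesis by simp
qed

lemma Phi_add:
  assumes x: "x \<in> I" and y: "y \<in> I"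
  shows "Phi (f x y) = Phi x + Phi y"
proof -
  obtain kx where kx: "b < rs f b kx x" using unb_rs[OF x bI] by blast
  obtain ky where ky: "b < rs f b ky y" using unb_rs[OF y bI] by blast
  define m where "m = max kx ky"
  define P where "P = pw f m b"
  have P: "P \<in> I" unfolding P_def using pw_in bI by simp
  have rx: "rs f b (Suc m) x = f x P" using rs_Suc_pw[OF x bI] unfolding P_def by simp
  have ry: "rs f b (Suc m) y = f y P" using rs_Suc_pw[OF y bI] unfolding P_def by simp
  have "rs f b kx x \<le> rs f b (Suc m) x" by (rule rs_mono[OF x]) (simp add: m_def)
  then have bx: "b \<le> f x P" using kx rx by linarith
  have "rs f b ky y \<le> rs f b (Suc m) y" by (rule rs_mono[OF y]) (simp add: m_def)
  then have by': "b \<le> f y P" using ky ry by linarith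
  have cyP: "f y P = f P y"
    using comm_pw[OF y bI comm_b[OF y], of m] unfolding P_def by simp
  have PP: "f P P = pw f (m+m+1) b" using pw_add[OF bI] unfolding P_def by simp
  have xy: "f x y \<in> I" using closed x y by simp
  have eq: "f (f x P) (f y P) = rs f b (Suc (m+m+1)) (f x y)"
  proof -
    have "f (f x P) (f y P) = f x (f P (f y P))" using assoc x y P closed by simp
    also have "\<dots> = f x (f (f P y) P)" using assoc x y P closed by simp
    also have "\<dots> = f x (f (f y P) P)" using cyP by simp
    also have "\<dots> = f (f x y) (f P P)" using assoc x y P closed by simp
    also have "\<dots> = rs f b (Suc (m+m+1)) (f x y)" by (simp only: rs_Suc_pw[OF xy bI] PP)
    finally show ?thesis .
  qed
  have Kxy: "b \<le> f (f x P) (f y P)" using K_closed bx by' closed x y P by simp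
  have "Phi (f x y) = phi (f (f x P) (f y P)) - real (Suc (m+m+1))"
    using Phi_eq[OF xy, of "Suc (m+m+1)"] eq Kxy by simp
  also have "\<dots> = phi (f x P) + phi (f y P) - real (Suc (m+m+1))"
    using phi_add closed x y P bx by' by simp
  also have "\<dots> = (phi (f x P) - real (Suc m)) + (phi (f y P) - real (Suc m))"
    by simp
  also have "\<dots> = Phi x + Phi y"
  proof -
    have hx: "Phi x = phi (f x P) - real (Suc m)" using Phi_eq[OF x, of "Suc m"] bx unfolding rx by simp
    have hy: "Phi y = phi (f y P) - real (Suc m)" using Phi_eq[OF y, of "Suc m"] by' unfolding ry by simp
    show ?thesis using hx hy by simp
  qed
  finally show ?thesis .
qed

lemma Phi_cont: "continuous_on I Phi"
  unfolding continuous_on_iff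
proof (intro ballI allI impI)
  fix x0 e :: real
  assume x0: "x0 \<in> I" and e: "0 < e"
  obtain j where j: "b < rs f b j x0" using unb_rs[OF x0 bI] by blast
  define z0 where "z0 = rs f b j x0"
  have z0: "z0 \<in> {x\<in>I. b \<le> x}" using j rs_in x0 bI unfolding z0_def by auto
  obtain d1 where d1: "d1 > 0" "\<forall>z\<in>{x\<in>I. b \<le> x}. dist z z0 < d1 \<longrightarrow> dist (phi z) (phi z0) < e"
    using phi_cont z0 e unfolding continuous_on_iff by blast
  have ep: "min d1 (z0 - b) > 0" using d1 j unfolding z0_def by simp
  obtain d2 where d2: "d2 > 0" "\<forall>x\<in>I. dist x x0 < d2 \<longrightarrow> dist (rs f b j x) (rs f b j x0) < min d1 (z0 - b)"
    using rs_cont[OF bI, of j] x0 ep unfolding continuous_on_iff by blast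
  show "\<exists>d>0. \<forall>x'\<in>I. dist x' x0 < d \<longrightarrow> dist (Phi x') (Phi x0) < e"
  proof (intro exI[of _ d2] conjI ballI impI d2(1))
    fix x assume xI: "x \<in> I" and dx: "dist x x0 < d2"
    have dd: "dist (rs f b j x) z0 < min d1 (z0 - b)" using d2 xI dx unfolding z0_def by blast
    then have bz: "b \<le> rs f b j x" unfolding dist_real_def by auto
    have "rs f b j x \<in> {x\<in>I. b \<le> x}" using bz rs_in xI bI by auto
    then have "dist (phi (rs f b j x)) (phi z0) < e" using d1 dd by auto
    moreover have "Phi x = phi (rs f b j x) - real j" using Phi_eq xI bz by simp
    moreover have "Phi x0 = phi z0 - real j" using Phi_eq x0 j unfolding z0_def by simp
    ultimately show "dist (Phi x) (Phi x0) < e" unfolding dist_real_def by simp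
  qed
qed

lemma aczelP_main: "\<exists>\<Phi>::real\<Rightarrow>real. continuous_on I \<Phi> \<and> strict_mono_on I \<Phi> \<and> (\<forall>x\<in>I. \<forall>y\<in>I. \<Phi> (f x y) = \<Phi> x + \<Phi> y)"
proof -
  have "strict_mono_on I Phi" by (rule strict_mono_onI) (rule Phi_strict)
  moreover have "continuous_on I Phi" by (rule Phi_cont)
  moreover have "\<forall>x\<in>I. \<forall>y\<in>I. Phi (f x y) = Phi x + Phi y" using Phi_add by simp
  ultimately have "continuous_on I Phi \<and> strict_mono_on I Phi \<and> (\<forall>x\<in>I. \<forall>y\<in>I. Phi (f x y) = Phi x + Phi y)"
    by simp
  then show ?thesis by blast
qed

end

lemma is_interval_neg: assumes "is_interval (S::real set)" shows "is_interval (uminus ` S)"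
  unfolding is_interval_1
proof clarify
  fix a b x assume h: "a \<in> S" "b \<in> S" "- a \<le> x" "x \<le> - b"
  then have "b \<le> - x" "- x \<le> a" by auto
  then have "- x \<in> S" using assms h unfolding is_interval_1 by blast
  then show "x \<in> uminus ` S" by (metis image_eqI minus_minus)
qed

context aczel
begin

lemma aczel_main:
  "\<exists>\<Phi>::real\<Rightarrow>real. continuous_on I \<Phi> \<and> strict_mono_on I \<Phi> \<and> (\<forall>x\<in>I. \<forall>y\<in>I. \<Phi> (f x y) = \<Phi> x + \<Phi> y)"
proof (cases "\<exists>b\<in>I. b < f b b")
  case True
  then obtain b where b: "b \<in> I" "b < f b b" by blast
  interpret P: aczelP I f b
    using aczel_axioms b by (simp add: aczelP_def aczelP_axioms_def)
  show ?thesis using P.aczelP_main .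
next
  case False
  then have le: "\<And>z. z \<in> I \<Longrightarrow> f z z \<le> z" by (simp add: not_less)
  obtain x where x: "x \<in> I" "f x x < x"
  proof -
    obtain u v where uv: "u \<in> I" "v \<in> I" "u \<noteq> v" using nontriv by blast
    have "f u u \<noteq> u \<or> f v v \<noteq> v" using idem_unique uv by blast
    then show ?thesis using that uv le by (metis order_le_less)
  qed
  define I' where "I' = uminus ` I"
  define g where "g = (\<lambda>x y. - f (- x) (- y))"
  have mI': "z \<in> I' \<longleftrightarrow> - z \<in> I" for z unfolding I'_def by (metis image_iff minus_minus)
  interpret R: aczel I' g
  proof
    show "is_interval I'" unfolding I'_def using is_interval_neg intv by blast
    obtain u v where uv: "u \<in> I" "v \<in> I" "u \<noteq> v" using nontriv by blast
    then show "\<exists>x\<in>I'. \<exists>y\<in>I'. x \<noteq> y" using mI'[of "-u"] mI'[of "-v"] by (intro bexI[of _ "-u"] bexI[of _ "-v"]) auto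
    show "g x y \<in> I'" if "x \<in> I'" "y \<in> I'" for x y using that closed mI' unfolding g_def by simp
    show "continuous_on (I' \<times> I') (\<lambda>p. g (fst p) (snd p))"
    proof -
      have "continuous_on (I' \<times> I') (\<lambda>p. (\<lambda>q. f (fst q) (snd q)) ((\<lambda>p. (- fst p, - snd p)) p))"
        by (rule continuous_on_compose2[OF cont]) (auto intro!: continuous_intros simp: mI')
      then have "continuous_on (I' \<times> I') (\<lambda>p. - (\<lambda>q. f (fst q) (snd q)) ((\<lambda>p. (- fst p, - snd p)) p))"
        by (rule continuous_on_minus)
      then show ?thesis unfolding g_def by simp
    qed
    show "g (g x y) z = g x (g y z)" if "x \<in> I'" "y \<in> I'" "z \<in> I'" for x y z
      using that assoc mI' unfolding g_def by simp
    show "inj_on (g x) I'" if "x \<in> I'" for x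
      using that injL[of "-x"] mI' unfolding g_def inj_on_def by (metis neg_equal_iff_equal)
    show "inj_on (\<lambda>z. g z y) I'" if "y \<in> I'" for y
      using that injR[of "-y"] mI' unfolding g_def inj_on_def by (metis neg_equal_iff_equal)
  qed
  interpret RP: aczelP I' g "- x"
  proof (unfold_locales)
    show "- x \<in> I'" using x mI' by simp
    show "- x < g (- x) (- x)" using x unfolding g_def by simp
  qed
  obtain \<Psi> :: "real \<Rightarrow> real" where \<Psi>: "continuous_on I' \<Psi>" "strict_mono_on I' \<Psi>" "\<forall>x\<in>I'. \<forall>y\<in>I'. \<Psi> (g x y) = \<Psi> x + \<Psi> y"
    using RP.aczelP_main by blast
  define \<Phi> where "\<Phi> = (\<lambda>z. - \<Psi> (- z))"
  have c: "continuous_on I \<Phi>"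
  proof -
    have "continuous_on I (\<lambda>z. \<Psi> (- z))"
      by (rule continuous_on_compose2[OF \<Psi>(1)]) (auto intro!: continuous_intros simp: mI')
    then show ?thesis unfolding \<Phi>_def by (rule continuous_on_minus)
  qed
  have s: "strict_mono_on I \<Phi>"
  proof (rule strict_mono_onI)
    fix r s assume "r \<in> I" "s \<in> I" "r < s"
    then have "\<Psi> (- s) < \<Psi> (- r)" using \<Psi>(2) mI' unfolding strict_mono_on_def monotone_on_def by simp
    then show "\<Phi> r < \<Phi> s" unfolding \<Phi>_def by simp
  qed
  have a: "\<forall>z\<in>I. \<forall>w\<in>I. \<Phi> (f z w) = \<Phi> z + \<Phi> w"
  proof (intro ballI)
    fix z w assume "z \<in> I" "w \<in> I"
    then have "\<Psi> (g (- z) (- w)) = \<Psi> (- z) + \<Psi> (- w)" using \<Psi>(3) mI' by simp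
    then show "\<Phi> (f z w) = \<Phi> z + \<Phi> w" unfolding \<Phi>_def g_def by simp
  qed
  show ?thesis using c s a by blast
qed

end

definition Jform :: "real set \<Rightarrow> bool" where
  "Jform J \<longleftrightarrow> ((\<exists>b. b \<le> 0 \<and> (J = {..<b} \<or> J = {..b})) \<or> (\<exists>a. 0 \<le> a \<and> (J = {a<..} \<or> J = {a..})) \<or> J = UNIV)"

lemma Jform_add: "Jform J \<Longrightarrow> s \<in> J \<Longrightarrow> t \<in> J \<Longrightarrow> s + t \<in> J"
  unfolding Jform_def by (elim disjE exE conjE) auto

lemma Jform_unbounded: "Jform J \<Longrightarrow> \<not> bounded J"
proof
  assume J: "Jform J" and bd: "bounded J"
  then obtain B where B: "\<forall>x\<in>J. \<bar>x\<bar> \<le> B" unfolding bounded_real by blast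
  have nb: "\<And>v. v \<in> J \<Longrightarrow> \<bar>v\<bar> \<le> B" using B by blast
  from J show False unfolding Jform_def
  proof (elim disjE exE conjE)
    fix b assume "b \<le> 0" "J = {..<b}"
    define v where "v = min (b - 1) (- \<bar>B\<bar> - 1)"
    have "v \<le> b - 1" "v \<le> - \<bar>B\<bar> - 1" unfolding v_def by auto
    then have "v \<in> J" "\<bar>v\<bar> > B" using \<open>J = {..<b}\<close> by auto
    then show False using nb by fastforce
  next
    fix b assume "b \<le> 0" "J = {..b}"
    define v where "v = min (b - 1) (- \<bar>B\<bar> - 1)"
    have "v \<le> b - 1" "v \<le> - \<bar>B\<bar> - 1" unfolding v_def by auto
    then have "v \<in> J" "\<bar>v\<bar> > B" using \<open>J = {..b}\<close> by auto
    then show False using nb by fastforce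
  next
    fix a assume "0 \<le> a" "J = {a<..}"
    define v where "v = max (a + 1) (\<bar>B\<bar> + 1)"
    have "a + 1 \<le> v" "\<bar>B\<bar> + 1 \<le> v" unfolding v_def by auto
    then have "v \<in> J" "\<bar>v\<bar> > B" using \<open>J = {a<..}\<close> by auto
    then show False using nb by fastforce
  next
    fix a assume "0 \<le> a" "J = {a..}"
    define v where "v = max (a + 1) (\<bar>B\<bar> + 1)"
    have "a + 1 \<le> v" "\<bar>B\<bar> + 1 \<le> v" unfolding v_def by auto
    then have "v \<in> J" "\<bar>v\<bar> > B" using \<open>J = {a..}\<close> by auto
    then show False using nb by fastforce
  next
    assume "J = UNIV"
    then have "\<bar>B\<bar> + 1 \<in> J" "\<bar>\<bar>B\<bar> + 1\<bar> > B" by auto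
    then show False using nb by fastforce
  qed
qed

lemma J_mult: "(\<forall>s\<in>J. \<forall>t\<in>J. s + t \<in> J) \<Longrightarrow> s \<in> J \<Longrightarrow> real (Suc n) * s \<in> J"
proof (induction n)
  case 0 then show ?case by simp
next
  case (Suc n)
  have "real (Suc (Suc n)) * s = real (Suc n) * s + s" by (simp add: algebra_simps)
  then show ?case using Suc by simp
qed

lemma J_form:
  fixes J :: "real set"
  assumes iv: "is_interval J" and nt: "\<exists>s\<in>J. \<exists>t\<in>J. s \<noteq> t" and ad: "\<forall>s\<in>J. \<forall>t\<in>J. s + t \<in> J"
  shows "Jform J"
proof -
  have btw: "a \<in> J \<Longrightarrow> c \<in> J \<Longrightarrow> a \<le> x \<Longrightarrow> x \<le> c \<Longrightarrow> x \<in> J" for a c x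
    using iv unfolding is_interval_1 by blast
  have big: "t \<in> J \<Longrightarrow> t > 0 \<Longrightarrow> \<exists>k\<in>J. x \<le> k" for t x
  proof -
    assume t: "t \<in> J" "t > 0"
    obtain n :: nat where "x / t < real n" using reals_Archimedean2 by blast
    then have "x < real (Suc n) * t" using t by (simp add: pos_divide_less_eq algebra_simps)
    then show ?thesis using J_mult[OF ad t(1), of n] by (intro bexI[of _ "real (Suc n) * t"]) auto
  qed
  have small: "s \<in> J \<Longrightarrow> s < 0 \<Longrightarrow> \<exists>k\<in>J. k \<le> x" for s x
  proof -
    assume s: "s \<in> J" "s < 0"
    obtain n :: nat where "x / s < real n" using reals_Archimedean2 by blast
    then have "real n * s < x" using s by (simp add: neg_divide_less_eq)
    then have "real (Suc n) * s \<le> x" using s by (simp add: algebra_simps)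
    then show ?thesis using J_mult[OF ad s(1), of n] by (intro bexI[of _ "real (Suc n) * s"]) auto
  qed
  show ?thesis
  proof (cases "(\<exists>s\<in>J. s < 0) \<and> (\<exists>t\<in>J. t > 0)")
    case True
    then obtain s t where st: "s \<in> J" "s < 0" "t \<in> J" "t > 0" by blast
    have allx: "x \<in> J" for x
    proof -
      obtain k1 where "k1 \<in> J" "k1 \<le> x" using small[OF st(1,2)] by blast
      moreover obtain k2 where "k2 \<in> J" "x \<le> k2" using big[OF st(3,4)] by blast
      ultimately show "x \<in> J" using btw by blast
    qed
    then have "J = UNIV" by auto
    then show ?thesis unfolding Jform_def by simp
  next
    case False
    then have "\<not> (\<exists>s\<in>J. s < 0) \<or> \<not> (\<exists>t\<in>J. t > 0)" by blast
    then show ?thesis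
    proof
      assume neg: "\<not> (\<exists>s\<in>J. s < 0)"
      then have nn: "\<forall>s\<in>J. 0 \<le> s" by (simp add: not_less)
      obtain t where t: "t \<in> J" "t > 0" using nt nn by (metis order_le_less)
      have ne: "J \<noteq> {}" using t by auto
      have bb: "bdd_below J" using nn by (auto intro: bdd_belowI)
      define a where "a = Inf J"
      have a0: "0 \<le> a" unfolding a_def using nn ne by (simp add: cInf_greatest)
      have up: "x \<in> J" if ax: "a < x" for x
      proof -
        obtain j where "j \<in> J" "j < x" using cInf_lessD[OF ne, of x] ax unfolding a_def by blast
        moreover obtain k where "k \<in> J" "x \<le> k" using big[OF t] by blast
        ultimately show ?thesis using btw by (meson less_imp_le)
      qed
      have lo: "a \<le> x" if "x \<in> J" for x unfolding a_def using cInf_lower[OF that bb] .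
      have "J = {a<..} \<or> J = {a..}"
      proof (cases "a \<in> J")
        case True
        then have "J = {a..}" using up lo by (auto simp: order_le_less)
        then show ?thesis by simp
      next
        case False
        then have "J = {a<..}" using up lo by (auto simp: order_le_less)
        then show ?thesis by simp
      qed
      then show ?thesis unfolding Jform_def using a0 by blast
    next
      assume pos: "\<not> (\<exists>t\<in>J. t > 0)"
      then have np: "\<forall>s\<in>J. s \<le> 0" by (simp add: not_less)
      obtain s where s: "s \<in> J" "s < 0" using nt np by (metis order_le_less)
      have ne: "J \<noteq> {}" using s by auto
      have ba: "bdd_above J" using np by (auto intro: bdd_aboveI)
      define b where "b = Sup J"
      have b0: "b \<le> 0" unfolding b_def using np ne by (simp add: cSup_least)
      have dn: "x \<in> J" if xb: "x < b" for x
      proof -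
        obtain j where "j \<in> J" "x < j" using less_cSupD[OF ne, of x] xb unfolding b_def by blast
        moreover obtain k where "k \<in> J" "k \<le> x" using small[OF s] by blast
        ultimately show ?thesis using btw by (meson less_imp_le)
      qed
      have hi: "x \<le> b" if "x \<in> J" for x unfolding b_def using cSup_upper[OF that ba] .
      have "J = {..<b} \<or> J = {..b}"
      proof (cases "b \<in> J")
        case True
        then have "J = {..b}" using dn hi by (auto simp: order_le_less)
        then show ?thesis by simp
      next
        case False
        then have "J = {..<b}" using dn hi by (auto simp: order_le_less)
        then show ?thesis by simp
      qed
      then show ?thesis unfolding Jform_def using b0 by blast
    qed
  qed
qed

lemma sum_in_J:
  assumes "Jform J" "xs \<noteq> []" "set xs \<subseteq> I" "\<phi> ` I = J"
  shows "sum_list (map \<phi> xs) \<in> J"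
  using assms(2,3)
proof (induction xs)
  case Nil then show ?case by simp
next
  case (Cons x ys)
  have "\<phi> x \<in> J" using Cons.prems assms(4) by auto
  show ?case
  proof (cases "ys = []")
    case True then show ?thesis using \<open>\<phi> x \<in> J\<close> by simp
  next
    case False
    then have "sum_list (map \<phi> ys) \<in> J" using Cons by simp
    then show ?thesis using Jform_add[OF assms(1) \<open>\<phi> x \<in> J\<close>] by simp
  qed
qed

lemma smon_inj: "strictly_monotonic_on S (g::real \<Rightarrow> real) \<Longrightarrow> inj_on g S"
  unfolding strictly_monotonic_on_def inj_on_def monotone_on_def
  by (metis linorder_neq_iff order_less_irrefl)


lemma rep_to_lhs:
  fixes I J :: "real set" and F :: "real list \<Rightarrow> real" and \<phi> \<psi> :: "real \<Rightarrow> real"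
  assumes std: "standard I F" and Jf: "Jform J"
    and cphi: "continuous_on I \<phi>" and sphi: "strictly_monotonic_on I \<phi>" and img: "\<phi> ` I = J"
    and cpsi: "continuous_on J \<psi>" and spsi: "strictly_monotonic_on J \<psi>"
    and rep: "\<forall>xs. xs \<noteq> [] \<and> set xs \<subseteq> I \<longrightarrow> F xs = \<psi> (sum_list (map \<phi> xs))"
  shows "preassociative I F \<and> unarily_quasi_range_idempotent I F
      \<and> continuous_on I (\<lambda>x. F [x]) \<and> inj_on (\<lambda>x. F [x]) I
      \<and> continuous_on (I \<times> I) (\<lambda>p. F [fst p, snd p])
      \<and> (\<forall>x\<in>I. inj_on (\<lambda>y. F [x, y]) I)
      \<and> (\<forall>y\<in>I. inj_on (\<lambda>x. F [x, y]) I)"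
proof -
  have injphi: "inj_on \<phi> I" using smon_inj sphi .
  have injpsi: "inj_on \<psi> J" using smon_inj spsi .
  have tup: "xs \<in> tuples I \<longleftrightarrow> set xs \<subseteq> I" for xs unfolding tuples_def by simp
  have phiJ: "\<phi> x \<in> J" if "x \<in> I" for x using img that by auto
  have F1: "F [x] = \<psi> (\<phi> x)" if "x \<in> I" for x using rep that by simp
  have F2: "F [x, y] = \<psi> (\<phi> x + \<phi> y)" if "x \<in> I" "y \<in> I" for x y using rep that by simp
  have stdD: "F xs = F [] \<Longrightarrow> set xs \<subseteq> I \<Longrightarrow> xs = []" for xs
    using std unfolding standard_def tuples_def by blast
  have P: "preassociative I F" unfolding preassociative_def
  proof (intro ballI impI)
    fix x y y' z assume h: "x \<in> tuples I" "y \<in> tuples I" "y' \<in> tuples I" "z \<in> tuples I" "F y = F y'"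
    have hs: "set x \<subseteq> I" "set y \<subseteq> I" "set y' \<subseteq> I" "set z \<subseteq> I" using h tup by auto
    show "F (x @ y @ z) = F (x @ y' @ z)"
    proof (cases "y = []")
      case True
      then have "y' = []" using stdD[of y'] h hs by simp
      then show ?thesis using True by simp
    next
      case False
      have ny': "y' \<noteq> []" using stdD[of y] h hs False by auto
      have sy: "sum_list (map \<phi> y) \<in> J" "sum_list (map \<phi> y') \<in> J"
        using sum_in_J[OF Jf _ _ img] False ny' hs by auto
      have e1: "F y = \<psi> (sum_list (map \<phi> y))" using rep False hs(2) by blast
      have e2: "F y' = \<psi> (sum_list (map \<phi> y'))" using rep ny' hs(3) by blast
      have "\<psi> (sum_list (map \<phi> y)) = \<psi> (sum_list (map \<phi> y'))" using e1 e2 h(5) by simp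
      then have eq: "sum_list (map \<phi> y) = sum_list (map \<phi> y')" using injpsi sy unfolding inj_on_def by blast
      have "F (x @ y @ z) = \<psi> (sum_list (map \<phi> (x @ y @ z)))" using rep False hs by simp
      also have "\<dots> = \<psi> (sum_list (map \<phi> (x @ y' @ z)))" using eq by simp
      also have "\<dots> = F (x @ y' @ z)" using rep ny' hs by simp
      finally show ?thesis .
    qed
  qed
  have U: "unarily_quasi_range_idempotent I F" unfolding unarily_quasi_range_idempotent_def
  proof
    show "(\<lambda>x. F [x]) ` I \<subseteq> F ` (tuples I - {[]})"
    proof
      fix v assume "v \<in> (\<lambda>x. F [x]) ` I"
      then obtain x where "x \<in> I" "v = F [x]" by auto
      then show "v \<in> F ` (tuples I - {[]})" using tup[of "[x]"] by (intro image_eqI[of _ _ "[x]"]) auto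
    qed
    show "F ` (tuples I - {[]}) \<subseteq> (\<lambda>x. F [x]) ` I"
    proof
      fix v assume "v \<in> F ` (tuples I - {[]})"
      then obtain xs where xs: "xs \<in> tuples I" "xs \<noteq> []" "v = F xs" by auto
      have "sum_list (map \<phi> xs) \<in> J" using sum_in_J[OF Jf xs(2) _ img] xs tup by auto
      then obtain x where x: "x \<in> I" "\<phi> x = sum_list (map \<phi> xs)" using img by auto
      have "v = F [x]" using xs x F1 rep tup by auto
      then show "v \<in> (\<lambda>x. F [x]) ` I" using x by auto
    qed
  qed
  have C1: "continuous_on I (\<lambda>x. F [x])"
  proof -
    have "continuous_on I (\<lambda>x. \<psi> (\<phi> x))"
      by (rule continuous_on_compose2[OF cpsi cphi]) (use img in auto)
    then show ?thesis using F1 continuous_on_cong by (metis (no_types, lifting))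
  qed
  have I1: "inj_on (\<lambda>x. F [x]) I"
    unfolding inj_on_def
  proof (intro ballI impI)
    fix x y assume h: "x \<in> I" "y \<in> I" "F [x] = F [y]"
    then have "\<psi> (\<phi> x) = \<psi> (\<phi> y)" using F1 by simp
    then have "\<phi> x = \<phi> y" using injpsi phiJ h unfolding inj_on_def by blast
    then show "x = y" using injphi h unfolding inj_on_def by blast
  qed
  have C2: "continuous_on (I \<times> I) (\<lambda>p. F [fst p, snd p])"
  proof -
    have c: "continuous_on (I \<times> I) (\<lambda>p. \<phi> (fst p) + \<phi> (snd p))"
      by (intro continuous_intros continuous_on_compose2[OF cphi]) auto
    have "continuous_on (I \<times> I) (\<lambda>p. \<psi> (\<phi> (fst p) + \<phi> (snd p)))"
      by (rule continuous_on_compose2[OF cpsi c]) (use Jform_add[OF Jf] phiJ in fastforce)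
    moreover have "\<And>p. p \<in> I \<times> I \<Longrightarrow> F [fst p, snd p] = \<psi> (\<phi> (fst p) + \<phi> (snd p))"
      using F2 by auto
    ultimately show ?thesis using continuous_on_cong by (metis (no_types, lifting))
  qed
  have IL: "\<forall>x\<in>I. inj_on (\<lambda>y. F [x, y]) I"
    unfolding inj_on_def
  proof (intro ballI impI)
    fix x y y' assume h: "x \<in> I" "y \<in> I" "y' \<in> I" "F [x, y] = F [x, y']"
    then have "\<psi> (\<phi> x + \<phi> y) = \<psi> (\<phi> x + \<phi> y')" using F2 by simp
    then have "\<phi> x + \<phi> y = \<phi> x + \<phi> y'"
      using injpsi Jform_add[OF Jf] phiJ h unfolding inj_on_def by blast
    then show "y = y'" using injphi h unfolding inj_on_def by simp
  qed
  have IR: "\<forall>y\<in>I. inj_on (\<lambda>x. F [x, y]) I"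
    unfolding inj_on_def
  proof (intro ballI impI)
    fix y x x' assume h: "y \<in> I" "x \<in> I" "x' \<in> I" "F [x, y] = F [x', y]"
    then have "\<psi> (\<phi> x + \<phi> y) = \<psi> (\<phi> x' + \<phi> y)" using F2 by simp
    then have "\<phi> x + \<phi> y = \<phi> x' + \<phi> y"
      using injpsi Jform_add[OF Jf] phiJ h unfolding inj_on_def by blast
    then show "x = x'" using injphi h unfolding inj_on_def by simp
  qed
  show ?thesis using P U C1 I1 C2 IL IR by blast
qed

lemma rep_psi:
  fixes I J :: "real set" and F :: "real list \<Rightarrow> real" and \<phi> \<psi> :: "real \<Rightarrow> real"
  assumes img: "\<phi> ` I = J"
    and rep: "\<forall>xs. xs \<noteq> [] \<and> set xs \<subseteq> I \<longrightarrow> F xs = \<psi> (sum_list (map \<phi> xs))"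
  shows "\<forall>t\<in>J. \<psi> t = F [inv_into I \<phi> t]"
proof
  fix t assume t: "t \<in> J"
  then have "inv_into I \<phi> t \<in> I" "\<phi> (inv_into I \<phi> t) = t" using img inv_into_into f_inv_into_f by (metis, metis)
  then show "\<psi> t = F [inv_into I \<phi> t]" using rep by simp
qed

lemma rep_open:
  fixes I J :: "real set" and \<phi> :: "real \<Rightarrow> real"
  assumes iv: "is_interval I" and Jf: "Jform J" and cphi: "continuous_on I \<phi>" and img: "\<phi> ` I = J"
  shows "(\<not> (\<exists>m\<in>I. \<forall>x\<in>I. m \<le> x)) \<or> (\<not> (\<exists>M\<in>I. \<forall>x\<in>I. x \<le> M))"
proof (rule ccontr)
  assume "\<not> ?thesis"
  then obtain m M where m: "m \<in> I" "\<forall>x\<in>I. m \<le> x" and M: "M \<in> I" "\<forall>x\<in>I. x \<le> M" by blast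
  have "I = {m..M}"
  proof
    show "I \<subseteq> {m..M}" using m M by auto
    show "{m..M} \<subseteq> I"
    proof
      fix x assume "x \<in> {m..M}"
      then have "m \<le> x" "x \<le> M" by auto
      then show "x \<in> I" using is_interval_1[THEN iffD1, OF iv] m(1) M(1) by blast
    qed
  qed
  then have "compact I" by simp
  then have "compact J" using compact_continuous_image[OF cphi] img by simp
  then have "bounded J" by (rule compact_imp_bounded)
  then show False using Jform_unbounded[OF Jf] by simp
qed


lemma lhs_to_rep:
  fixes I :: "real set" and F :: "real list \<Rightarrow> real"
  assumes iv: "is_interval I" and nt: "\<exists>x\<in>I. \<exists>y\<in>I. x \<noteq> y"
    and PA: "preassociative I F" and UQ: "unarily_quasi_range_idempotent I F"
    and C1: "continuous_on I (\<lambda>x. F [x])" and J1: "inj_on (\<lambda>x. F [x]) I"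
    and C2: "continuous_on (I \<times> I) (\<lambda>p. F [fst p, snd p])"
    and IL: "\<forall>x\<in>I. inj_on (\<lambda>y. F [x, y]) I" and IR: "\<forall>y\<in>I. inj_on (\<lambda>x. F [x, y]) I"
  shows "\<exists>J (\<phi>::real\<Rightarrow>real) (\<psi>::real\<Rightarrow>real). Jform J \<and> continuous_on I \<phi> \<and> strict_mono_on I \<phi> \<and> \<phi> ` I = J
     \<and> continuous_on J \<psi> \<and> strictly_monotonic_on J \<psi>
     \<and> (\<forall>xs. xs \<noteq> [] \<and> set xs \<subseteq> I \<longrightarrow> F xs = \<psi> (sum_list (map \<phi> xs)))"
proof -
  define F1 where "F1 = (\<lambda>x. F [x])"
  have C1': "continuous_on I F1" using C1 unfolding F1_def .
  have J1': "inj_on F1 I" using J1 unfolding F1_def .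
  have sF1: "strict_mono_on I F1 \<or> strict_antimono_on I F1" using inj_cont_strict[OF iv C1' J1'] .
  define G where "G = inv_into I F1"
  have cG: "continuous_on (F1 ` I) G"
    using sF1 inv_strict_mono_cont(1)[OF iv C1'] inv_strict_antimono_cont(1)[OF iv C1'] unfolding G_def by blast
  have tup: "xs \<in> tuples I \<longleftrightarrow> set xs \<subseteq> I" for xs unfolding tuples_def by simp
  have UQ': "F ` (tuples I - {[]}) = F1 ` I" using UQ unfolding unarily_quasi_range_idempotent_def F1_def by simp
  have rng: "F [x, y] \<in> F1 ` I" if "x \<in> I" "y \<in> I" for x y
  proof -
    have "[x, y] \<in> tuples I - {[]}" using tup that by simp
    then show ?thesis using UQ' by blast
  qed
  define H where "H = (\<lambda>x y. G (F [x, y]))"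
  have HI: "H x y \<in> I" if "x \<in> I" "y \<in> I" for x y
    unfolding H_def G_def using rng[OF that] by (rule inv_into_into)
  have FH: "F1 (H x y) = F [x, y]" if "x \<in> I" "y \<in> I" for x y
    unfolding H_def G_def using rng[OF that] by (rule f_inv_into_f)
  have preD: "F (a @ y @ z) = F (a @ y' @ z)"
    if "set a \<subseteq> I" "set y \<subseteq> I" "set y' \<subseteq> I" "set z \<subseteq> I" "F y = F y'" for a y y' z
    using PA that tup unfolding preassociative_def by blast
  have inj1: "x = y" if "x \<in> I" "y \<in> I" "F1 x = F1 y" for x y using J1' that unfolding inj_on_def by blast
  have assocH: "H (H x y) z = H x (H y z)" if h: "x \<in> I" "y \<in> I" "z \<in> I" for x y z
  proof (rule inj1)
    show "H (H x y) z \<in> I" "H x (H y z) \<in> I" using HI h by auto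
    have "F1 (H (H x y) z) = F ([] @ [H x y] @ [z])" using FH HI h by simp
    also have "\<dots> = F ([] @ [x, y] @ [z])"
      by (rule preD) (use HI h FH in \<open>auto simp: F1_def\<close>)
    finally have 1: "F1 (H (H x y) z) = F [x, y, z]" by simp
    have "F1 (H x (H y z)) = F ([x] @ [H y z] @ [])" using FH HI h by simp
    also have "\<dots> = F ([x] @ [y, z] @ [])"
      by (rule preD) (use HI h FH in \<open>auto simp: F1_def\<close>)
    finally have 2: "F1 (H x (H y z)) = F [x, y, z]" by simp
    show "F1 (H (H x y) z) = F1 (H x (H y z))" using 1 2 by simp
  qed
  have contH: "continuous_on (I \<times> I) (\<lambda>p. H (fst p) (snd p))"
  proof -
    have "continuous_on (I \<times> I) (\<lambda>p. G (F [fst p, snd p]))"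
      by (rule continuous_on_compose2[OF cG C2]) (use rng in auto)
    then show ?thesis unfolding H_def .
  qed
  have injHL: "inj_on (H x) I" if "x \<in> I" for x
    unfolding inj_on_def
  proof (intro ballI impI)
    fix y y' assume h: "y \<in> I" "y' \<in> I" "H x y = H x y'"
    then have "F [x, y] = F [x, y']" using FH that by metis
    then show "y = y'" using IL that h unfolding inj_on_def by blast
  qed
  have injHR: "inj_on (\<lambda>z. H z y) I" if "y \<in> I" for y
    unfolding inj_on_def
  proof (intro ballI impI)
    fix x x' assume h: "x \<in> I" "x' \<in> I" "H x y = H x' y"
    then have "F [x, y] = F [x', y]" using FH that by metis
    then show "x = x'" using IR that h unfolding inj_on_def by blast
  qed
  interpret A: aczel I H
    by (unfold_locales) (use iv nt HI contH assocH injHL injHR in auto)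
  obtain \<Phi> :: "real \<Rightarrow> real" where \<Phi>: "continuous_on I \<Phi>" "strict_mono_on I \<Phi>"
    "\<forall>x\<in>I. \<forall>y\<in>I. \<Phi> (H x y) = \<Phi> x + \<Phi> y"
    using A.aczel_main by blast
  have injPhi: "inj_on \<Phi> I" using \<Phi>(2) strict_mono_on_imp_inj_on by blast
  define J where "J = \<Phi> ` I"
  define \<psi> where "\<psi> = (\<lambda>t. F1 (inv_into I \<Phi> t))"
  have Jf: "Jform J"
  proof (rule J_form)
    show "is_interval J" unfolding J_def using cont_image_interval[OF iv \<Phi>(1)] .
    obtain u v where uv: "u \<in> I" "v \<in> I" "u \<noteq> v" using nt by blast
    then have "\<Phi> u \<noteq> \<Phi> v" using injPhi unfolding inj_on_def by blast
    then show "\<exists>s\<in>J. \<exists>t\<in>J. s \<noteq> t" unfolding J_def using uv by blast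
    show "\<forall>s\<in>J. \<forall>t\<in>J. s + t \<in> J"
    proof (intro ballI)
      fix s t assume "s \<in> J" "t \<in> J"
      then obtain x y where "x \<in> I" "y \<in> I" "s = \<Phi> x" "t = \<Phi> y" unfolding J_def by auto
      then show "s + t \<in> J" unfolding J_def using \<Phi>(3) HI by (metis image_eqI)
    qed
  qed
  have cinv: "continuous_on J (inv_into I \<Phi>)" "strict_mono_on J (inv_into I \<Phi>)"
    using inv_strict_mono_cont[OF iv \<Phi>(1) \<Phi>(2)] unfolding J_def by auto
  have invI: "inv_into I \<Phi> t \<in> I" if "t \<in> J" for t using that unfolding J_def by (rule inv_into_into)
  have cpsi: "continuous_on J \<psi>"
    unfolding \<psi>_def by (rule continuous_on_compose2[OF C1' cinv(1)]) (use invI in auto)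
  have spsi: "strictly_monotonic_on J \<psi>"
    unfolding strictly_monotonic_on_def
  proof (rule disjE[OF sF1])
    assume m: "strict_mono_on I F1"
    have "strict_mono_on J \<psi>"
    proof (rule strict_mono_onI)
      fix r s assume "r \<in> J" "s \<in> J" "r < s"
      then have "inv_into I \<Phi> r < inv_into I \<Phi> s" using cinv(2) unfolding strict_mono_on_def monotone_on_def by blast
      then show "\<psi> r < \<psi> s" unfolding \<psi>_def using m invI \<open>r \<in> J\<close> \<open>s \<in> J\<close>
        unfolding strict_mono_on_def monotone_on_def by blast
    qed
    then show "strict_mono_on J \<psi> \<or> strict_antimono_on J \<psi>" by simp
  next
    assume m: "strict_antimono_on I F1"
    have "strict_antimono_on J \<psi>"
      unfolding monotone_on_def
    proof (intro ballI impI)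
      fix r s assume "r \<in> J" "s \<in> J" "r < s"
      then have "inv_into I \<Phi> r < inv_into I \<Phi> s" using cinv(2) unfolding strict_mono_on_def monotone_on_def by blast
      then show "\<psi> s < \<psi> r" unfolding \<psi>_def using m invI \<open>r \<in> J\<close> \<open>s \<in> J\<close>
        unfolding monotone_on_def by blast
    qed
    then show "strict_mono_on J \<psi> \<or> strict_antimono_on J \<psi>" by simp
  qed
  have form: "sum_list (map \<Phi> xs) \<in> J \<and> F xs = F1 (inv_into I \<Phi> (sum_list (map \<Phi> xs)))"
    if "xs \<noteq> []" "set xs \<subseteq> I" for xs
    using that
  proof (induction xs)
    case Nil then show ?case by simp
  next
    case (Cons x ys)
    have x: "x \<in> I" using Cons.prems by simp
    show ?case
    proof (cases "ys = []")
      case True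
      have "inv_into I \<Phi> (\<Phi> x) = x" using inv_into_f_f[OF injPhi x] .
      then show ?thesis using True x unfolding J_def F1_def by simp
    next
      case False
      define s where "s = sum_list (map \<Phi> ys)"
      define w where "w = inv_into I \<Phi> s"
      have IH: "s \<in> J" "F ys = F1 w" using Cons.IH[OF False] Cons.prems unfolding s_def w_def by auto
      have wI: "w \<in> I" using invI[OF IH(1)] unfolding w_def .
      have ws: "\<Phi> w = s" using IH(1) unfolding w_def J_def by (simp add: f_inv_into_f)
      have "F (x # ys) = F ([x] @ ys @ [])" by simp
      also have "\<dots> = F ([x] @ [w] @ [])"
        by (rule preD) (use x Cons.prems wI IH(2) in \<open>auto simp: F1_def\<close>)
      also have "\<dots> = F1 (H x w)" using FH[OF x wI] by simp
      finally have e1: "F (x # ys) = F1 (H x w)" .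
      have e2: "\<Phi> (H x w) = sum_list (map \<Phi> (x # ys))" using \<Phi>(3) x wI ws unfolding s_def by simp
      have "sum_list (map \<Phi> (x # ys)) \<in> J" using e2[symmetric] HI[OF x wI] unfolding J_def by blast
      moreover have "inv_into I \<Phi> (sum_list (map \<Phi> (x # ys))) = H x w"
        using e2[symmetric] inv_into_f_f[OF injPhi HI[OF x wI]] by simp
      ultimately show ?thesis using e1 by simp
    qed
  qed
  have rep: "\<forall>xs. xs \<noteq> [] \<and> set xs \<subseteq> I \<longrightarrow> F xs = \<psi> (sum_list (map \<Phi> xs))"
    using form unfolding \<psi>_def by blast
  show ?thesis
    using Jf \<Phi>(1) \<Phi>(2) cpsi spsi rep unfolding J_def by blast
qed

theorem theorem5p2:
  fixes I :: "real set" and F :: "real list \<Rightarrow> real"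
  assumes I_interval: "is_interval I"
    and I_nontrivial: "\<exists>x\<in>I. \<exists>y\<in>I. x \<noteq> y"
    and F_standard: "standard I F"
  defines "LHS \<equiv> preassociative I F \<and> unarily_quasi_range_idempotent I F
      \<and> continuous_on I (\<lambda>x. F [x]) \<and> inj_on (\<lambda>x. F [x]) I
      \<and> continuous_on (I \<times> I) (\<lambda>p. F [fst p, snd p])
      \<and> (\<forall>x\<in>I. inj_on (\<lambda>y. F [x, y]) I)
      \<and> (\<forall>y\<in>I. inj_on (\<lambda>x. F [x, y]) I)"
    and "Rep \<equiv> \<lambda>(J::real set) (\<phi>::real \<Rightarrow> real) (\<psi>::real \<Rightarrow> real).
      ((\<exists>b. b \<le> 0 \<and> (J = {..<b} \<or> J = {..b}))
        \<or> (\<exists>a. 0 \<le> a \<and> (J = {a<..} \<or> J = {a..}))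
        \<or> J = UNIV)
      \<and> continuous_on I \<phi> \<and> strictly_monotonic_on I \<phi> \<and> \<phi> ` I = J
      \<and> continuous_on J \<psi> \<and> strictly_monotonic_on J \<psi>
      \<and> (\<forall>xs. xs \<noteq> [] \<and> set xs \<subseteq> I \<longrightarrow> F xs = \<psi> (sum_list (map \<phi> xs)))"
  shows "(LHS \<longleftrightarrow> (\<exists>J \<phi> \<psi>. Rep J \<phi> \<psi>))
    \<and> (LHS \<longrightarrow>
        (\<forall>J \<phi> \<psi>. Rep J \<phi> \<psi> \<longrightarrow> (\<forall>t\<in>J. \<psi> t = F [inv_into I \<phi> t]))
        \<and> ((\<not> (\<exists>m\<in>I. \<forall>x\<in>I. m \<le> x)) \<or> (\<not> (\<exists>M\<in>I. \<forall>x\<in>I. x \<le> M)))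
        \<and> (\<exists>J \<phi> \<psi>. Rep J \<phi> \<psi> \<and> strict_mono_on I \<phi>))"
proof -
  have Rep_eq: "Rep J \<phi> \<psi> \<longleftrightarrow> Jform J \<and> continuous_on I \<phi> \<and> strictly_monotonic_on I \<phi> \<and> \<phi> ` I = J
      \<and> continuous_on J \<psi> \<and> strictly_monotonic_on J \<psi>
      \<and> (\<forall>xs. xs \<noteq> [] \<and> set xs \<subseteq> I \<longrightarrow> F xs = \<psi> (sum_list (map \<phi> xs)))" for J \<phi> \<psi>
    unfolding Rep_def Jform_def by simp
  have A: "\<exists>J \<phi> \<psi>. Rep J \<phi> \<psi> \<and> strict_mono_on I \<phi>" if L: LHS
  proof -
    from L have h: "preassociative I F" "unarily_quasi_range_idempotent I F"
      "continuous_on I (\<lambda>x. F [x])" "inj_on (\<lambda>x. F [x]) I"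
      "continuous_on (I \<times> I) (\<lambda>p. F [fst p, snd p])"
      "\<forall>x\<in>I. inj_on (\<lambda>y. F [x, y]) I" "\<forall>y\<in>I. inj_on (\<lambda>x. F [x, y]) I"
      unfolding LHS_def by auto
    obtain J and \<phi> :: "real \<Rightarrow> real" and \<psi> :: "real \<Rightarrow> real" where r: "Jform J" "continuous_on I \<phi>" "strict_mono_on I \<phi>" "\<phi> ` I = J"
      "continuous_on J \<psi>" "strictly_monotonic_on J \<psi>"
      "\<forall>xs. xs \<noteq> [] \<and> set xs \<subseteq> I \<longrightarrow> F xs = \<psi> (sum_list (map \<phi> xs))"
      using lhs_to_rep[OF I_interval I_nontrivial h] by blast
    have "strictly_monotonic_on I \<phi>" using r(3) unfolding strictly_monotonic_on_def by simp
    then have "Rep J \<phi> \<psi>" using Rep_eq r by blast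
    then show ?thesis using r(3) by blast
  qed
  have B: "LHS" if R: "Rep J \<phi> \<psi>" for J \<phi> \<psi>
  proof -
    have r: "Jform J" "continuous_on I \<phi>" "strictly_monotonic_on I \<phi>" "\<phi> ` I = J"
      "continuous_on J \<psi>" "strictly_monotonic_on J \<psi>"
      "\<forall>xs. xs \<noteq> [] \<and> set xs \<subseteq> I \<longrightarrow> F xs = \<psi> (sum_list (map \<phi> xs))"
      using R Rep_eq by blast+
    show ?thesis unfolding LHS_def using rep_to_lhs[OF F_standard r] .
  qed
  have C: "\<forall>t\<in>J. \<psi> t = F [inv_into I \<phi> t]" if R: "Rep J \<phi> \<psi>" for J \<phi> \<psi>
  proof -
    have r: "\<phi> ` I = J" "\<forall>xs. xs \<noteq> [] \<and> set xs \<subseteq> I \<longrightarrow> F xs = \<psi> (sum_list (map \<phi> xs))"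
      using R Rep_eq by blast+
    show ?thesis using rep_psi[OF r] .
  qed
  have D: "(\<not> (\<exists>m\<in>I. \<forall>x\<in>I. m \<le> x)) \<or> (\<not> (\<exists>M\<in>I. \<forall>x\<in>I. x \<le> M))" if R: "Rep J \<phi> \<psi>" for J \<phi> \<psi>
  proof -
    have r: "Jform J" "continuous_on I \<phi>" "\<phi> ` I = J" using R Rep_eq by blast+
    show ?thesis using rep_open[OF I_interval r(1) r(2) r(3)] .
  qed
  show ?thesis
  proof (intro conjI impI)
    show "LHS = (\<exists>J \<phi> \<psi>. Rep J \<phi> \<psi>)" using A B by blast
  next
    assume L: LHS
    show "\<forall>J \<phi> \<psi>. Rep J \<phi> \<psi> \<longrightarrow> (\<forall>t\<in>J. \<psi> t = F [inv_into I \<phi> t])" using C by blast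
    show "(\<not> (\<exists>m\<in>I. \<forall>x\<in>I. m \<le> x)) \<or> (\<not> (\<exists>M\<in>I. \<forall>x\<in>I. x \<le> M))" using A[OF L] D by blast
    show "\<exists>J \<phi> \<psi>. Rep J \<phi> \<psi> \<and> strict_mono_on I \<phi>" using A[OF L] .
  qed
qed

end
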